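(* The operator $T_0:\mathcal{H}^{real}\to\mathcal{H}^{real}$ is compact.
   Context: Let $\phi_0(x)=\sqrt{2}\,\tanh(x)/\sqrt{3-\tanh^2(x)}$ and $\eta_0=1-\phi_0^4$. Let $\mathcal{H}^{real}$ be the space of continuous functions $f:\mathbb{R}\to\mathbb{R}$ with $f'\in L^2(\mathbb{R})$ and $\eta_0^{1/2}f\in L^2(\mathbb{R})$. Equip it with the inner product $$\langle f,g\rangle_0=\int_{\mathbb{R}}\big(f'g'+\eta_0fg\big)\,dx,$$ which makes $\mathcal{H}^{real}$ a Hilbert space. $T_0$ is the bounded self-adjoint operator on $\mathcal{H}^{real}$ defined (via the Riesz representation theorem) by $$\langle T_0f,g\rangle_0=\int_{\mathbb{R}}\eta_0fg\,dx\qquad\text{for all }g\in\mathcal{H}^{real}.$$ *)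

theory Defs
  imports "HOL-Analysis.Analysis"
begin

definition phi0 :: "real \<Rightarrow> real" where
  "phi0 x = sqrt 2 * tanh x / sqrt (3 - (tanh x)^2)"

definition eta0 :: "real \<Rightarrow> real" where
  "eta0 x = 1 - (phi0 x)^4"

text \<open>d is a (weak) derivative of f in L2: d is square integrable and f is the
  indefinite integral of d (so f is locally absolutely continuous with f' = d a.e.).\<close>
definition is_L2_deriv :: "(real \<Rightarrow> real) \<Rightarrow> (real \<Rightarrow> real) \<Rightarrow> bool" where
  "is_L2_deriv f d \<longleftrightarrow> d \<in> borel_measurable lborel \<and>
     integrable lborel (\<lambda>x. (d x)^2) \<and>
     (\<forall>a b. a \<le> b \<longrightarrow> set_integrable lborel {a..b} d \<and>
        f b - f a = (LINT x:{a..b}|lborel. d x))"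

definition Hreal :: "(real \<Rightarrow> real) set" where
  "Hreal = {f. continuous_on UNIV f \<and> (\<exists>d. is_L2_deriv f d) \<and>
               integrable lborel (\<lambda>x. eta0 x * (f x)^2)}"

definition wderiv :: "(real \<Rightarrow> real) \<Rightarrow> real \<Rightarrow> real" where
  "wderiv f = (SOME d. is_L2_deriv f d)"

definition ip0 :: "(real \<Rightarrow> real) \<Rightarrow> (real \<Rightarrow> real) \<Rightarrow> real" where
  "ip0 f g = (\<integral>x. wderiv f x * wderiv g x \<partial>lborel) + (\<integral>x. eta0 x * f x * g x \<partial>lborel)"

definition norm0 :: "(real \<Rightarrow> real) \<Rightarrow> real" where
  "norm0 f = sqrt (ip0 f f)"

definition T0 :: "(real \<Rightarrow> real) \<Rightarrow> (real \<Rightarrow> real)" where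
  "T0 f = (THE u. u \<in> Hreal \<and> (\<forall>g\<in>Hreal. ip0 u g = (\<integral>x. eta0 x * f x * g x \<partial>lborel)))"

end

theory Submission
  imports Defs "HOL-Library.Diagonal_Subsequence"
begin

lemma tanh_sq_lt1: "(tanh (x::real))^2 < (1::real)"
proof -
  have "\<bar>tanh x\<bar> < 1" using tanh_real_bounds[of x] by auto
  then show ?thesis by (metis abs_square_less_1)
qed

lemma phi0_sq: "(phi0 x)^2 = 2 * (tanh x)^2 / (3 - (tanh x)^2)"
proof -
  have "3 - (tanh x)^2 > 0" using tanh_sq_lt1[of x] by linarith
  then show ?thesis unfolding phi0_def by (simp add: power_divide power_mult_distrib)
qed

lemma phi0_sq_bounds: "0 \<le> (phi0 x)^2" "(phi0 x)^2 < 1"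
  "1 - (phi0 x)^2 \<le> 3/2 * (1 - (tanh x)^2)"
proof -
  let ?t = "(tanh x)^2"
  have t: "0 \<le> ?t" "?t < 1" using tanh_sq_lt1[of x] by auto
  show "0 \<le> (phi0 x)^2" by simp
  show "(phi0 x)^2 < 1" unfolding phi0_sq using t by (simp add: divide_less_eq)
  have "1 - (phi0 x)^2 = 3 * (1 - ?t) / (3 - ?t)" unfolding phi0_sq using t
    by (simp add: field_simps)
  also have "\<dots> \<le> 3 * (1 - ?t) / 2" using t by (intro divide_left_mono) auto
  finally show "1 - (phi0 x)^2 \<le> 3/2 * (1 - (tanh x)^2)" by simp
qed

lemma eta0_pos: "0 < eta0 x"
proof -
  have "(phi0 x)^4 = ((phi0 x)^2)^2" by simp
  also have "\<dots> < 1" using phi0_sq_bounds[of x]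
    by (metis abs_of_nonneg abs_square_less_1)
  finally show ?thesis unfolding eta0_def by simp
qed

lemma eta0_le1: "eta0 x \<le> 1"
  unfolding eta0_def by simp

lemma eta0_nonneg: "0 \<le> eta0 x" using eta0_pos[of x] by simp

lemma cont_eta0: "continuous_on UNIV eta0"
proof -
  have "\<And>x. 3 - (tanh x)^2 \<noteq> (0::real)" using tanh_sq_lt1 by (smt (verit))
  then have "\<And>x. sqrt (3 - (tanh x)^2) \<noteq> (0::real)" by simp
  then show ?thesis unfolding eta0_def phi0_def
    by (intro continuous_intros) auto
qed

lemma eta0_measurable[measurable]: "eta0 \<in> borel_measurable borel"
  using cont_eta0 borel_measurable_continuous_onI by blast

lemma one_minus_tanh_sq: "1 - (tanh (x::real))^2 \<le> 4 * exp (-2 * \<bar>x\<bar>)"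
proof -
  define e where "e = exp (-2 * \<bar>x\<bar>)"
  have e: "0 < e" unfolding e_def by simp
  have "(tanh x)^2 = (tanh \<bar>x\<bar>)^2" by (simp add: tanh_real_abs)
  also have "tanh \<bar>x\<bar> = (1 - e) / (1 + e)" unfolding e_def tanh_real_altdef by simp
  finally have "1 - (tanh x)^2 = 1 - ((1 - e) / (1 + e))^2" by simp
  also have "\<dots> = 1 - (1 - e)^2 / (1 + e)^2" by (simp add: power_divide)
  also have "\<dots> = ((1 + e)^2 - (1 - e)^2) / (1 + e)^2" using e
    by (simp add: diff_divide_distrib)
  also have "\<dots> = 4 * e / (1 + e)^2" by (simp add: power2_eq_square algebra_simps)
  also have "\<dots> \<le> 4 * e / 1" using e by (intro divide_left_mono) (auto simp: power2_eq_square intro!: mult_ge1_I)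
  finally show ?thesis unfolding e_def by simp
qed

lemma eta0_decay: "eta0 x * (1 + \<bar>x\<bar>) \<le> 12 * exp (- \<bar>x\<bar>)"
proof -
  have p: "0 \<le> (phi0 x)^2" "(phi0 x)^2 < 1" using phi0_sq_bounds by auto
  have "eta0 x = (1 - (phi0 x)^2) * (1 + (phi0 x)^2)" unfolding eta0_def
    by (simp add: algebra_simps power2_eq_square power4_eq_xxxx)
  also have "\<dots> \<le> (1 - (phi0 x)^2) * 2" using p by (intro mult_left_mono) auto
  also have "\<dots> \<le> 3/2 * (1 - (tanh x)^2) * 2" using phi0_sq_bounds(3)[of x] by simp
  also have "\<dots> \<le> 3/2 * (4 * exp (-2 * \<bar>x\<bar>)) * 2" using one_minus_tanh_sq[of x] by simp
  finally have e: "eta0 x \<le> 12 * exp (-2 * \<bar>x\<bar>)" by simp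
  have "1 + \<bar>x\<bar> \<le> exp \<bar>x\<bar>" by (rule exp_ge_add_one_self_aux) simp
  then have "eta0 x * (1 + \<bar>x\<bar>) \<le> 12 * exp (-2 * \<bar>x\<bar>) * exp \<bar>x\<bar>"
    using e eta0_nonneg[of x] by (intro mult_mono) auto
  also have "\<dots> = 12 * exp (- \<bar>x\<bar>)" by (simp add: exp_add[symmetric])
  finally show ?thesis .
qed

lemma integrable_exp_abs: "integrable lborel (\<lambda>x::real. exp (- \<bar>x\<bar>))"
proof -
  have "(\<lambda>x::real. exp (- 1 * x)) integrable_on {0..}"
    by (rule integrable_on_exp_minus_to_infinity) simp
  then have "(\<lambda>x::real. exp (- x)) absolutely_integrable_on {0..}"
    by (intro nonnegative_absolutely_integrable_1) auto
  then have "integrable lebesgue (\<lambda>x::real. indicator {0..} x *\<^sub>R exp (- x))"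
    unfolding set_integrable_def .
  then have i1: "integrable lborel (\<lambda>x::real. indicator {0..} x *\<^sub>R exp (- x))"
    by (subst (asm) integrable_completion) auto
  then have i2: "integrable lborel (\<lambda>x::real. indicator {0..} (0 + (-1) * x) *\<^sub>R exp (- (0 + (-1) * x)))"
    by (subst lborel_integrable_real_affine_iff[where f="\<lambda>x. indicator {0..} x *\<^sub>R exp (- x)"]) auto
  have "integrable lborel (\<lambda>x::real. indicator {0..} x *\<^sub>R exp (- x) + indicator {0..} (0 + (-1) * x) *\<^sub>R exp (- (0 + (-1) * x)))"
    using i1 i2 by (rule Bochner_Integration.integrable_add)
  then show ?thesis
    by (rule Bochner_Integration.integrable_bound) (auto simp: indicator_def)
qed

lemma integrable_eta0_weight: "integrable lborel (\<lambda>x. eta0 x * (1 + \<bar>x\<bar>))"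
proof -
  have "integrable lborel (\<lambda>x::real. 12 * exp (- \<bar>x\<bar>))"
    using integrable_exp_abs by simp
  then show ?thesis
    by (rule Bochner_Integration.integrable_bound)
      (use eta0_decay eta0_nonneg in \<open>auto intro!: mult_nonneg_nonneg\<close>)
qed

lemma integrable_eta0: "integrable lborel eta0"
proof -
  have "norm (eta0 x) \<le> norm (eta0 x * (1 + \<bar>x\<bar>))" for x
    using eta0_nonneg[of x] by (simp add: abs_mult mult_le_cancel_left1)
  then show ?thesis
    using integrable_eta0_weight by (intro Bochner_Integration.integrable_bound[OF integrable_eta0_weight]) auto
qed

lemma integrable_prod_sq:
  fixes f g :: "'a \<Rightarrow> real"
  assumes [measurable]: "f \<in> borel_measurable M" "g \<in> borel_measurable M"
    and "integrable M (\<lambda>x. (f x)^2)" "integrable M (\<lambda>x. (g x)^2)"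
  shows "integrable M (\<lambda>x. f x * g x)"
proof -
  have "integrable M (\<lambda>x. (f x)^2 + (g x)^2)" using assms by auto
  then show ?thesis
  proof (rule Bochner_Integration.integrable_bound)
    show "AE x in M. norm (f x * g x) \<le> norm ((f x)^2 + (g x)^2)"
    proof (intro AE_I2)
      fix x
      have "0 \<le> (\<bar>f x\<bar> - \<bar>g x\<bar>)^2" by simp
      also have "(\<bar>f x\<bar> - \<bar>g x\<bar>)^2 = (f x)^2 + (g x)^2 - 2 * (\<bar>f x\<bar> * \<bar>g x\<bar>)"
        by (simp add: power2_diff)
      finally have "2 * (\<bar>f x\<bar> * \<bar>g x\<bar>) \<le> (f x)^2 + (g x)^2" by simp
      moreover have "0 \<le> \<bar>f x\<bar> * \<bar>g x\<bar>" by simp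
      ultimately have "\<bar>f x\<bar> * \<bar>g x\<bar> \<le> (f x)^2 + (g x)^2" by linarith
      then show "norm (f x * g x) \<le> norm ((f x)^2 + (g x)^2)"
        by (simp add: abs_mult)
    qed
  qed auto
qed

lemma integrable_wprod_sq:
  fixes f g w :: "'a \<Rightarrow> real"
  assumes [measurable]: "f \<in> borel_measurable M" "g \<in> borel_measurable M" "w \<in> borel_measurable M"
    and w: "\<And>x. 0 \<le> w x"
    and "integrable M (\<lambda>x. w x * (f x)^2)" "integrable M (\<lambda>x. w x * (g x)^2)"
  shows "integrable M (\<lambda>x. w x * f x * g x)"
proof -
  have "integrable M (\<lambda>x. (sqrt (w x) * f x) * (sqrt (w x) * g x))"
  proof (rule integrable_prod_sq)
    show "integrable M (\<lambda>x. (sqrt (w x) * f x)^2)"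
      using assms(5) by (simp add: power_mult_distrib w)
    show "integrable M (\<lambda>x. (sqrt (w x) * g x)^2)"
      using assms(6) by (simp add: power_mult_distrib w)
  qed auto
  moreover have "(\<lambda>x. (sqrt (w x) * f x) * (sqrt (w x) * g x)) = (\<lambda>x. w x * f x * g x)"
  proof
    fix x
    have "(sqrt (w x) * f x) * (sqrt (w x) * g x) = (sqrt (w x) * sqrt (w x)) * f x * g x"
      by (simp add: mult_ac)
    also have "\<dots> = w x * f x * g x" using w[of x] by simp
    finally show "(sqrt (w x) * f x) * (sqrt (w x) * g x) = w x * f x * g x" .
  qed
  ultimately show ?thesis by simp
qed

lemma L2D_lin:
  assumes f: "is_L2_deriv f d" and g: "is_L2_deriv g e"
  shows "is_L2_deriv (\<lambda>x. a * f x + b * g x) (\<lambda>x. a * d x + b * e x)"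
proof -
  have [measurable]: "d \<in> borel_measurable lborel" "e \<in> borel_measurable lborel"
    using f g unfolding is_L2_deriv_def by auto
  have d2: "integrable lborel (\<lambda>x. (d x)^2)" and e2: "integrable lborel (\<lambda>x. (e x)^2)"
    using f g unfolding is_L2_deriv_def by auto
  have "integrable lborel (\<lambda>x. 2 * a^2 * (d x)^2 + 2 * b^2 * (e x)^2)"
    using d2 e2 by auto
  then have sq: "integrable lborel (\<lambda>x. (a * d x + b * e x)^2)"
  proof (rule Bochner_Integration.integrable_bound)
    show "AE x in lborel. norm ((a * d x + b * e x)^2) \<le> norm (2 * a^2 * (d x)^2 + 2 * b^2 * (e x)^2)"
    proof (intro AE_I2)
      fix x
      have "(a * d x + b * e x)^2 \<le> 2 * a^2 * (d x)^2 + 2 * b^2 * (e x)^2"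
        using sum_squares_ge_zero[of "a * d x - b * e x" 0]
        by (simp add: power2_eq_square algebra_simps)
      then show "norm ((a * d x + b * e x)^2) \<le> norm (2 * a^2 * (d x)^2 + 2 * b^2 * (e x)^2)"
        by simp
    qed
  qed auto
  show ?thesis
    unfolding is_L2_deriv_def
  proof (intro conjI allI impI)
    fix u v :: real assume "u \<le> v"
    have sf: "set_integrable lborel {u..v} d" "f v - f u = (LINT x:{u..v}|lborel. d x)"
      using f \<open>u \<le> v\<close> unfolding is_L2_deriv_def by auto
    have sg: "set_integrable lborel {u..v} e" "g v - g u = (LINT x:{u..v}|lborel. e x)"
      using g \<open>u \<le> v\<close> unfolding is_L2_deriv_def by auto
    show "set_integrable lborel {u..v} (\<lambda>x. a * d x + b * e x)"
      using sf sg by (intro set_integral_add(1) set_integrable_mult_right) auto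
    have "(LINT x:{u..v}|lborel. a * d x + b * e x) = (LINT x:{u..v}|lborel. a * d x) + (LINT x:{u..v}|lborel. b * e x)"
      using sf sg by (intro set_integral_add(2) set_integrable_mult_right) auto
    also have "\<dots> = a * (LINT x:{u..v}|lborel. d x) + b * (LINT x:{u..v}|lborel. e x)"
      by (simp add: set_integral_mult_right)
    finally show "a * f v + b * g v - (a * f u + b * g u) = (LINT x:{u..v}|lborel. a * d x + b * e x)"
      using sf sg by (simp add: algebra_simps)
  qed (use sq in auto)
qed

lemma zero_intervals_ae_zero:
  fixes e :: "real \<Rightarrow> real"
  assumes [measurable]: "e \<in> borel_measurable lborel"
    and si: "\<And>a b. a \<le> b \<Longrightarrow> set_integrable lborel {a..b} e"
    and z: "\<And>a b. a \<le> b \<Longrightarrow> (LINT x:{a..b}|lborel. e x) = 0"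
  shows "AE x in lborel. e x = 0"
proof -
  have n: "AE x in lborel. x \<in> {- real n..real n} \<longrightarrow> e x = 0" for n :: nat
  proof -
    define g where "g = (\<lambda>x. indicator {- real n..real n} x * e x)"
    have [measurable]: "g \<in> borel_measurable lborel" unfolding g_def by measurable
    have gi: "integrable lborel g"
      using si[of "- real n" "real n"] unfolding g_def set_integrable_def by simp
    have zero_int: "(\<integral>y. g y * indicator {x<..} y \<partial>lborel) = 0" for x
    proof -
      have "(\<integral>y. g y * indicator {x<..} y \<partial>lborel) = (LINT y:({- real n..real n} \<inter> {x<..})|lborel. e y)"
        unfolding g_def set_lebesgue_integral_def
        by (intro Bochner_Integration.integral_cong) (auto simp: indicator_def)
      also have "\<dots> = 0"
      proof (cases "x < - real n")
        case True
        then have "{- real n..real n} \<inter> {x<..} = {- real n..real n}" by auto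
        then show ?thesis using z[of "- real n" "real n"] by simp
      next
        case False
        show ?thesis
        proof (cases "x < real n")
          case True
          with False have S: "{- real n..real n} \<inter> {x<..} = {x<..real n}" by auto
          have "(LINT y:{x<..real n}|lborel. e y) = (LBINT y=x..real n. e y)"
            using True by (simp add: interval_integral_Ioc)
          also have "\<dots> = (LINT y:{x..real n}|lborel. e y)"
            using True by (simp add: interval_integral_Icc)
          also have "\<dots> = 0" using z[of x "real n"] True by simp
          finally show ?thesis using S by simp
        next
          case False
          then have "{- real n..real n} \<inter> {x<..} = {}" by auto
          then show ?thesis by (simp add: set_lebesgue_integral_def)
        qed
      qed
      finally show ?thesis .
    qed
    have fin: "(\<integral>\<^sup>+ y. ennreal (h y) \<partial>lborel) < \<infinity>" if "integrable lborel h" for h :: "real \<Rightarrow> real"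
    proof -
      have "(\<integral>\<^sup>+ y. ennreal (h y) \<partial>lborel) \<le> (\<integral>\<^sup>+ y. ennreal (norm (h y)) \<partial>lborel)"
        by (intro nn_integral_mono) (auto intro: ennreal_leI)
      also have "\<dots> < \<infinity>" using that unfolding integrable_iff_bounded by simp
      finally show ?thesis .
    qed
    have eqpm: "(\<integral>\<^sup>+ y. ennreal (g y) * indicator {x<..} y \<partial>lborel)
        = (\<integral>\<^sup>+ y. ennreal (- g y) * indicator {x<..} y \<partial>lborel)" for x
    proof -
      define h where "h = (\<lambda>y. g y * indicator {x<..} y)"
      have hi: "integrable lborel h" unfolding h_def
        using integrable_mult_indicator[OF _ gi, of "{x<..}"] by (simp add: mult.commute)
      have hi': "integrable lborel (\<lambda>y. - h y)" using hi by auto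
      have e1: "(\<integral>\<^sup>+ y. ennreal (g y) * indicator {x<..} y \<partial>lborel) = (\<integral>\<^sup>+ y. ennreal (h y) \<partial>lborel)"
        unfolding h_def by (intro nn_integral_cong) (auto simp: indicator_def)
      have e2: "(\<integral>\<^sup>+ y. ennreal (- g y) * indicator {x<..} y \<partial>lborel) = (\<integral>\<^sup>+ y. ennreal (- h y) \<partial>lborel)"
        unfolding h_def by (intro nn_integral_cong) (auto simp: indicator_def)
      have "0 = enn2real (\<integral>\<^sup>+ y. ennreal (h y) \<partial>lborel) - enn2real (\<integral>\<^sup>+ y. ennreal (- h y) \<partial>lborel)"
        using real_lebesgue_integral_def[OF hi] zero_int[of x] unfolding h_def by simp
      then have "enn2real (\<integral>\<^sup>+ y. ennreal (h y) \<partial>lborel) = enn2real (\<integral>\<^sup>+ y. ennreal (- h y) \<partial>lborel)"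
        by simp
      moreover have "(\<integral>\<^sup>+ y. ennreal (h y) \<partial>lborel) < \<infinity>" using fin[OF hi] .
      moreover have "(\<integral>\<^sup>+ y. ennreal (- h y) \<partial>lborel) < \<infinity>" using fin[OF hi'] .
      ultimately have "(\<integral>\<^sup>+ y. ennreal (h y) \<partial>lborel) = (\<integral>\<^sup>+ y. ennreal (- h y) \<partial>lborel)"
        by (metis ennreal_enn2real infinity_ennreal_def)
      then show ?thesis using e1 e2 by simp
    qed
    have "density lborel (\<lambda>y. ennreal (g y)) = density lborel (\<lambda>y. ennreal (- g y))"
    proof (rule measure_eqI_lessThan)
      fix x
      show "emeasure (density lborel (\<lambda>y. ennreal (g y))) {x<..} < \<infinity>"
      proof -
        have "emeasure (density lborel (\<lambda>y. ennreal (g y))) {x<..} \<le> (\<integral>\<^sup>+ y. ennreal (g y) \<partial>lborel)"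
          by (subst emeasure_density) (auto intro!: nn_integral_mono simp: indicator_def)
        also have "\<dots> < \<infinity>" using fin[OF gi] .
        finally show ?thesis .
      qed
      show "emeasure (density lborel (\<lambda>y. ennreal (g y))) {x<..} = emeasure (density lborel (\<lambda>y. ennreal (- g y))) {x<..}"
        using eqpm[of x] by (simp add: emeasure_density)
    qed (simp_all)
    then have "AE y in lborel. ennreal (g y) = ennreal (- g y)"
      by (intro sigma_finite_measure.density_unique[OF sigma_finite_lborel]) auto
    then show ?thesis
    proof (rule AE_mp, intro AE_I2 impI)
      fix y assume *: "ennreal (g y) = ennreal (- g y)" and "y \<in> {- real n..real n}"
      then have gy: "g y = e y" unfolding g_def by simp
      show "e y = 0"
      proof (rule ccontr)
        assume "e y \<noteq> 0"
        then consider "e y > 0" | "e y < 0" by linarith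
        then show False
        proof cases
          case 1
          then have "ennreal (- g y) = 0" using gy by (intro ennreal_neg) simp
          moreover have "ennreal (g y) \<noteq> 0" using 1 gy by (simp add: ennreal_eq_0_iff)
          ultimately show False using * by simp
        next
          case 2
          then have "ennreal (g y) = 0" using gy by (intro ennreal_neg) simp
          moreover have "ennreal (- g y) \<noteq> 0" using 2 gy by (simp add: ennreal_eq_0_iff)
          ultimately show False using * by simp
        qed
      qed
    qed
  qed
  have "AE x in lborel. \<forall>n::nat. x \<in> {- real n..real n} \<longrightarrow> e x = 0"
    using n by (subst AE_all_countable) auto
  then show ?thesis
  proof (rule AE_mp, intro AE_I2 impI)
    fix x assume *: "\<forall>n::nat. x \<in> {- real n..real n} \<longrightarrow> e x = 0"
    obtain n :: nat where "\<bar>x\<bar> \<le> real n" using real_arch_simple by blast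
    then have "- real n \<le> x \<and> x \<le> real n" by linarith
    then show "e x = 0" using *[rule_format, of n] by auto
  qed
qed

lemma L2D_unique:
  assumes f1: "is_L2_deriv f d1" and f2: "is_L2_deriv f d2"
  shows "AE x in lborel. d1 x = d2 x"
proof -
  have [measurable]: "d1 \<in> borel_measurable lborel" "d2 \<in> borel_measurable lborel"
    using f1 f2 unfolding is_L2_deriv_def by auto
  have "AE x in lborel. d1 x - d2 x = 0"
  proof (rule zero_intervals_ae_zero)
    fix a b :: real assume ab: "a \<le> b"
    have s1: "set_integrable lborel {a..b} d1" "f b - f a = (LINT x:{a..b}|lborel. d1 x)"
      using f1 ab unfolding is_L2_deriv_def by auto
    have s2: "set_integrable lborel {a..b} d2" "f b - f a = (LINT x:{a..b}|lborel. d2 x)"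
      using f2 ab unfolding is_L2_deriv_def by auto
    show "set_integrable lborel {a..b} (\<lambda>x. d1 x - d2 x)" using s1 s2 by auto
    show "(LINT x:{a..b}|lborel. d1 x - d2 x) = 0" using s1 s2 by (simp add: set_integral_diff(2))
  qed auto
  then show ?thesis by auto
qed

lemma Hreal_D:
  assumes "f \<in> Hreal"
  shows "is_L2_deriv f (wderiv f)" "continuous_on UNIV f"
    "integrable lborel (\<lambda>x. eta0 x * (f x)^2)" "f \<in> borel_measurable lborel"
proof -
  have ex: "\<exists>d. is_L2_deriv f d" using assms unfolding Hreal_def by auto
  show "is_L2_deriv f (wderiv f)" unfolding wderiv_def using someI_ex[OF ex] .
  show c: "continuous_on UNIV f" using assms unfolding Hreal_def by auto
  show "integrable lborel (\<lambda>x. eta0 x * (f x)^2)" using assms unfolding Hreal_def by auto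
  show "f \<in> borel_measurable lborel" using c borel_measurable_continuous_onI by simp
qed

lemma L2D_meas: "is_L2_deriv f d \<Longrightarrow> d \<in> borel_measurable lborel"
  and L2D_sq: "is_L2_deriv f d \<Longrightarrow> integrable lborel (\<lambda>x. (d x)^2)"
  unfolding is_L2_deriv_def by auto

lemma ip0_eq:
  assumes f: "is_L2_deriv f d" and g: "is_L2_deriv g e"
  shows "ip0 f g = (\<integral>x. d x * e x \<partial>lborel) + (\<integral>x. eta0 x * f x * g x \<partial>lborel)"
proof -
  have f': "is_L2_deriv f (wderiv f)" unfolding wderiv_def using someI[of "is_L2_deriv f", OF f] .
  have g': "is_L2_deriv g (wderiv g)" unfolding wderiv_def using someI[of "is_L2_deriv g", OF g] .
  have "AE x in lborel. wderiv f x = d x" by (rule L2D_unique[OF f' f])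
  moreover have "AE x in lborel. wderiv g x = e x" by (rule L2D_unique[OF g' g])
  ultimately have "AE x in lborel. wderiv f x * wderiv g x = d x * e x" by eventually_elim simp
  then have "(\<integral>x. wderiv f x * wderiv g x \<partial>lborel) = (\<integral>x. d x * e x \<partial>lborel)"
    by (rule integral_cong_AE[rotated 2]) (use f g f' g' L2D_meas in auto)
  then show ?thesis unfolding ip0_def by simp
qed

lemma Hreal_I:
  assumes "continuous_on UNIV f" "is_L2_deriv f d" "integrable lborel (\<lambda>x. eta0 x * (f x)^2)"
  shows "f \<in> Hreal"
  using assms unfolding Hreal_def by auto

lemma Hreal_lin:
  assumes f: "f \<in> Hreal" and g: "g \<in> Hreal"
  shows "(\<lambda>x. a * f x + b * g x) \<in> Hreal"
proof (rule Hreal_I)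
  note fD = Hreal_D[OF f] and gD = Hreal_D[OF g]
  show "continuous_on UNIV (\<lambda>x. a * f x + b * g x)"
    using fD(2) gD(2) by (intro continuous_intros) auto
  show "is_L2_deriv (\<lambda>x. a * f x + b * g x) (\<lambda>x. a * wderiv f x + b * wderiv g x)"
    by (rule L2D_lin[OF fD(1) gD(1)])
  have [measurable]: "f \<in> borel_measurable lborel" "g \<in> borel_measurable lborel"
    using fD gD by auto
  have "integrable lborel (\<lambda>x. 2 * a^2 * (eta0 x * (f x)^2) + 2 * b^2 * (eta0 x * (g x)^2))"
    using fD(3) gD(3) by auto
  then show "integrable lborel (\<lambda>x. eta0 x * (a * f x + b * g x)^2)"
  proof (rule Bochner_Integration.integrable_bound)
    show "AE x in lborel. norm (eta0 x * (a * f x + b * g x)^2) \<le> norm (2 * a^2 * (eta0 x * (f x)^2) + 2 * b^2 * (eta0 x * (g x)^2))"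
    proof (intro AE_I2)
      fix x
      have "(a * f x + b * g x)^2 \<le> 2 * a^2 * (f x)^2 + 2 * b^2 * (g x)^2"
        using sum_squares_ge_zero[of "a * f x - b * g x" 0]
        by (simp add: power2_eq_square algebra_simps)
      then have "eta0 x * (a * f x + b * g x)^2 \<le> eta0 x * (2 * a^2 * (f x)^2 + 2 * b^2 * (g x)^2)"
        using eta0_nonneg[of x] by (rule mult_left_mono)
      then show "norm (eta0 x * (a * f x + b * g x)^2) \<le> norm (2 * a^2 * (eta0 x * (f x)^2) + 2 * b^2 * (eta0 x * (g x)^2))"
        using eta0_nonneg[of x] by (simp add: algebra_simps)
    qed
  qed auto
qed

lemma Hreal_int_eta_prod:
  assumes "f \<in> Hreal" "g \<in> Hreal"
  shows "integrable lborel (\<lambda>x. eta0 x * f x * g x)"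
  using Hreal_D[OF assms(1)] Hreal_D[OF assms(2)]
  by (intro integrable_wprod_sq[where w=eta0]) (auto simp: eta0_nonneg)

lemma Hreal_int_d_prod:
  assumes "f \<in> Hreal" "g \<in> Hreal"
  shows "integrable lborel (\<lambda>x. wderiv f x * wderiv g x)"
  using Hreal_D[OF assms(1)] Hreal_D[OF assms(2)]
  by (intro integrable_prod_sq) (auto dest: L2D_meas L2D_sq)

lemma ip0_lin:
  assumes f: "f \<in> Hreal" and g: "g \<in> Hreal" and h: "h \<in> Hreal"
  shows "ip0 (\<lambda>x. a * f x + b * g x) h = a * ip0 f h + b * ip0 g h"
proof -
  note fD = Hreal_D[OF f] and gD = Hreal_D[OF g] and hD = Hreal_D[OF h]
  have "ip0 (\<lambda>x. a * f x + b * g x) h =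
     (\<integral>x. (a * wderiv f x + b * wderiv g x) * wderiv h x \<partial>lborel) + (\<integral>x. eta0 x * (a * f x + b * g x) * h x \<partial>lborel)"
    by (rule ip0_eq[OF L2D_lin[OF fD(1) gD(1)] hD(1)])
  also have "(\<integral>x. (a * wderiv f x + b * wderiv g x) * wderiv h x \<partial>lborel)
      = a * (\<integral>x. wderiv f x * wderiv h x \<partial>lborel) + b * (\<integral>x. wderiv g x * wderiv h x \<partial>lborel)"
  proof -
    have "(\<integral>x. (a * wderiv f x + b * wderiv g x) * wderiv h x \<partial>lborel)
       = (\<integral>x. a * (wderiv f x * wderiv h x) + b * (wderiv g x * wderiv h x) \<partial>lborel)"
      by (simp add: algebra_simps)
    also have "\<dots> = (\<integral>x. a * (wderiv f x * wderiv h x) \<partial>lborel) + (\<integral>x. b * (wderiv g x * wderiv h x) \<partial>lborel)"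
      using Hreal_int_d_prod[OF f h] Hreal_int_d_prod[OF g h] by (intro Bochner_Integration.integral_add) auto
    finally show ?thesis by simp
  qed
  also have "(\<integral>x. eta0 x * (a * f x + b * g x) * h x \<partial>lborel)
      = a * (\<integral>x. eta0 x * f x * h x \<partial>lborel) + b * (\<integral>x. eta0 x * g x * h x \<partial>lborel)"
  proof -
    have "(\<integral>x. eta0 x * (a * f x + b * g x) * h x \<partial>lborel)
       = (\<integral>x. a * (eta0 x * f x * h x) + b * (eta0 x * g x * h x) \<partial>lborel)"
      by (simp add: algebra_simps)
    also have "\<dots> = (\<integral>x. a * (eta0 x * f x * h x) \<partial>lborel) + (\<integral>x. b * (eta0 x * g x * h x) \<partial>lborel)"
      using Hreal_int_eta_prod[OF f h] Hreal_int_eta_prod[OF g h] by (intro Bochner_Integration.integral_add) auto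
    finally show ?thesis by simp
  qed
  finally show ?thesis unfolding ip0_def by (simp add: algebra_simps)
qed

lemma ip0_sym: "ip0 f g = ip0 g f"
  unfolding ip0_def by (simp add: mult_ac)

lemma ip0_self:
  assumes "f \<in> Hreal"
  shows "ip0 f f = (\<integral>x. (wderiv f x)^2 \<partial>lborel) + (\<integral>x. eta0 x * (f x)^2 \<partial>lborel)"
  unfolding ip0_def by (simp add: power2_eq_square mult.assoc)

lemma ip0_ge_parts:
  assumes "f \<in> Hreal"
  shows "(\<integral>x. (wderiv f x)^2 \<partial>lborel) \<le> ip0 f f" "(\<integral>x. eta0 x * (f x)^2 \<partial>lborel) \<le> ip0 f f"
    "0 \<le> ip0 f f"
proof -
  have a: "0 \<le> (\<integral>x. (wderiv f x)^2 \<partial>lborel)" by simp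
  have b: "0 \<le> (\<integral>x. eta0 x * (f x)^2 \<partial>lborel)" by (simp add: eta0_nonneg)
  show "(\<integral>x. (wderiv f x)^2 \<partial>lborel) \<le> ip0 f f" "(\<integral>x. eta0 x * (f x)^2 \<partial>lborel) \<le> ip0 f f"
    "0 \<le> ip0 f f"
    using a b ip0_self[OF assms] by linarith+
qed

lemma ip0_quad:
  assumes f: "f \<in> Hreal" and g: "g \<in> Hreal"
  shows "ip0 (\<lambda>x. a * f x + b * g x) (\<lambda>x. a * f x + b * g x) = a^2 * ip0 f f + 2 * a * b * ip0 f g + b^2 * ip0 g g"
proof -
  have h: "(\<lambda>x. a * f x + b * g x) \<in> Hreal" by (rule Hreal_lin[OF f g])
  have "ip0 (\<lambda>x. a * f x + b * g x) (\<lambda>x. a * f x + b * g x) = a * ip0 f (\<lambda>x. a * f x + b * g x) + b * ip0 g (\<lambda>x. a * f x + b * g x)"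
    by (rule ip0_lin[OF f g h])
  also have "ip0 f (\<lambda>x. a * f x + b * g x) = a * ip0 f f + b * ip0 g f"
    by (subst ip0_sym) (rule ip0_lin[OF f g f])
  also have "ip0 g (\<lambda>x. a * f x + b * g x) = a * ip0 f g + b * ip0 g g"
    by (subst ip0_sym) (rule ip0_lin[OF f g g])
  finally show ?thesis by (simp add: ip0_sym[of g f] power2_eq_square algebra_simps)
qed

lemma disc_le:
  fixes A B C :: real
  assumes "\<And>t. 0 \<le> A + 2 * t * C + t^2 * B"
  shows "C^2 \<le> A * B"
proof (cases "B > 0")
  case True
  have "0 \<le> A + 2 * (- C / B) * C + (- C / B)^2 * B" by (rule assms)
  also have "\<dots> = A - C^2 / B" using True by (simp add: power2_eq_square field_simps)
  finally have "C^2 / B \<le> A" by simp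
  then show ?thesis using True by (simp add: divide_le_eq mult.commute)
next
  case False
  have B: "B \<le> 0" using False by simp
  have "C = 0"
  proof (rule ccontr)
    assume C: "C \<noteq> 0"
    define t where "t = - (\<bar>A\<bar> + 1) / (2 * C)"
    have "2 * t * C = - (\<bar>A\<bar> + 1)" unfolding t_def using C by (simp add: field_simps)
    moreover have "t^2 * B \<le> 0" using B by (simp add: mult_nonneg_nonpos)
    ultimately have "A + 2 * t * C + t^2 * B < 0" by linarith
    with assms[of t] show False by simp
  qed
  moreover have "B = 0"
  proof (rule ccontr)
    assume "B \<noteq> 0"
    then have Bn: "B < 0" using B by simp
    define t where "t = sqrt ((\<bar>A\<bar> + 1) / (- B))"
    have "0 \<le> (\<bar>A\<bar> + 1) / (- B)" using Bn by (intro divide_nonneg_pos) auto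
    then have "t^2 = (\<bar>A\<bar> + 1) / (- B)" unfolding t_def by (rule real_sqrt_pow2)
    then have "t^2 * B = - (\<bar>A\<bar> + 1)" using Bn by (simp add: field_simps)
    with assms[of t] \<open>C = 0\<close> show False by simp
  qed
  ultimately show ?thesis by simp
qed

lemma ip0_CS:
  assumes f: "f \<in> Hreal" and g: "g \<in> Hreal"
  shows "(ip0 f g)^2 \<le> ip0 f f * ip0 g g"
proof (rule disc_le)
  fix t
  have "0 \<le> ip0 (\<lambda>x. 1 * f x + t * g x) (\<lambda>x. 1 * f x + t * g x)"
    using ip0_ge_parts(3)[OF Hreal_lin[OF f g]] .
  also have "\<dots> = ip0 f f + 2 * t * ip0 f g + t^2 * ip0 g g"
    using ip0_quad[OF f g, of 1 t] by simp
  finally show "0 \<le> ip0 f f + 2 * t * ip0 f g + t^2 * ip0 g g" .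
qed

lemma ip0_CS_abs:
  assumes f: "f \<in> Hreal" and g: "g \<in> Hreal"
  shows "\<bar>ip0 f g\<bar> \<le> norm0 f * norm0 g"
proof -
  have "\<bar>ip0 f g\<bar> = sqrt ((ip0 f g)^2)" by simp
  also have "\<dots> \<le> sqrt (ip0 f f * ip0 g g)" using ip0_CS[OF f g] by (rule real_sqrt_le_mono)
  also have "\<dots> = norm0 f * norm0 g" unfolding norm0_def by (simp add: real_sqrt_mult)
  finally show ?thesis .
qed

lemma integral_CS:
  fixes u v :: "'a \<Rightarrow> real"
  assumes [measurable]: "u \<in> borel_measurable M" "v \<in> borel_measurable M"
    and u2: "integrable M (\<lambda>x. (u x)^2)" and v2: "integrable M (\<lambda>x. (v x)^2)"
  shows "(\<integral>x. u x * v x \<partial>M)^2 \<le> (\<integral>x. (u x)^2 \<partial>M) * (\<integral>x. (v x)^2 \<partial>M)"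
proof (rule disc_le)
  fix t :: real
  have uv: "integrable M (\<lambda>x. u x * v x)" by (rule integrable_prod_sq) (use assms in auto)
  have "0 \<le> (\<integral>x. (u x + t * v x)^2 \<partial>M)" by simp
  also have "(\<integral>x. (u x + t * v x)^2 \<partial>M) = (\<integral>x. (u x)^2 + 2 * t * (u x * v x) + t^2 * (v x)^2 \<partial>M)"
    by (simp add: power2_eq_square algebra_simps)
  also have "\<dots> = (\<integral>x. (u x)^2 \<partial>M) + 2 * t * (\<integral>x. u x * v x \<partial>M) + t^2 * (\<integral>x. (v x)^2 \<partial>M)"
    using u2 v2 uv by simp
  finally show "0 \<le> (\<integral>x. (u x)^2 \<partial>M) + 2 * t * (\<integral>x. u x * v x \<partial>M) + t^2 * (\<integral>x. (v x)^2 \<partial>M)" .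
qed

lemma holder_L2D_le:
  assumes f: "is_L2_deriv f d" and ab: "a \<le> b"
  shows "(f b - f a)^2 \<le> (b - a) * (\<integral>x. (d x)^2 \<partial>lborel)"
proof -
  have [measurable]: "d \<in> borel_measurable lborel" using L2D_meas[OF f] .
  have d2: "integrable lborel (\<lambda>x. (d x)^2)" using L2D_sq[OF f] .
  have si: "set_integrable lborel {a..b} d" and fe: "f b - f a = (LINT x:{a..b}|lborel. d x)"
    using f ab unfolding is_L2_deriv_def by auto
  define u where "u = (\<lambda>x::real. indicator {a..b} x :: real)"
  define v where "v = (\<lambda>x. indicator {a..b} x * d x)"
  have [measurable]: "u \<in> borel_measurable lborel" "v \<in> borel_measurable lborel"
    unfolding u_def v_def by measurable
  have u2: "(\<lambda>x. (u x)^2) = u" unfolding u_def by (auto simp: indicator_def)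
  have "integrable lborel u" unfolding u_def by (intro integrable_real_indicator) (use ab in auto)
  then have u2i: "integrable lborel (\<lambda>x. (u x)^2)" using u2 by simp
  have v2: "(\<lambda>x. (v x)^2) = (\<lambda>x. indicator {a..b} x *\<^sub>R (d x)^2)"
    unfolding v_def by (auto simp: indicator_def fun_eq_iff)
  have v2i: "integrable lborel (\<lambda>x. (v x)^2)" unfolding v2
    by (rule integrable_mult_indicator) (use d2 in auto)
  have uv: "(\<lambda>x. u x * v x) = (\<lambda>x. indicator {a..b} x *\<^sub>R d x)"
    unfolding u_def v_def by (auto simp: indicator_def fun_eq_iff)
  have "(f b - f a)^2 = (\<integral>x. u x * v x \<partial>lborel)^2"
    unfolding fe uv set_lebesgue_integral_def ..
  also have "\<dots> \<le> (\<integral>x. (u x)^2 \<partial>lborel) * (\<integral>x. (v x)^2 \<partial>lborel)"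
    by (rule integral_CS) (use u2i v2i in auto)
  also have "(\<integral>x. (u x)^2 \<partial>lborel) = b - a"
  proof -
    have "(\<integral>x. (u x)^2 \<partial>lborel) = (\<integral>x. u x \<partial>lborel)" using u2 by metis
    also have "\<dots> = b - a" unfolding u_def using ab by simp
    finally show ?thesis .
  qed
  also have "(\<integral>x. (v x)^2 \<partial>lborel) \<le> (\<integral>x. (d x)^2 \<partial>lborel)"
    by (rule integral_mono[OF v2i d2]) (simp add: v_def indicator_def)
  finally show ?thesis using ab by (simp add: mult_left_mono)
qed

lemma holder_L2D:
  assumes f: "is_L2_deriv f d"
  shows "(f y - f x)^2 \<le> \<bar>y - x\<bar> * (\<integral>t. (d t)^2 \<partial>lborel)"
proof (cases "x \<le> y")
  case True
  then show ?thesis using holder_L2D_le[OF f True] by simp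
next
  case False
  then have "(f x - f y)^2 \<le> (x - y) * (\<integral>t. (d t)^2 \<partial>lborel)" using holder_L2D_le[OF f, of y x] by simp
  then show ?thesis using False by (simp add: power2_commute)
qed

lemma holder_Hreal:
  assumes f: "f \<in> Hreal"
  shows "(f y - f x)^2 \<le> \<bar>y - x\<bar> * ip0 f f"
proof -
  have "(f y - f x)^2 \<le> \<bar>y - x\<bar> * (\<integral>t. (wderiv f t)^2 \<partial>lborel)"
    by (rule holder_L2D[OF Hreal_D(1)[OF f]])
  also have "\<dots> \<le> \<bar>y - x\<bar> * ip0 f f"
    by (intro mult_left_mono ip0_ge_parts(1)[OF f]) simp
  finally show ?thesis .
qed

lemma L2D_cont:
  assumes f: "is_L2_deriv f d"
  shows "continuous_on UNIV f"
  unfolding continuous_on_iff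
proof (intro ballI allI impI)
  fix x :: real and e :: real assume e: "0 < e"
  define C where "C = (\<integral>t. (d t)^2 \<partial>lborel)"
  have C: "0 \<le> C" unfolding C_def by simp
  define \<delta> where "\<delta> = e^2 / (C + 1)"
  have \<delta>: "0 < \<delta>" unfolding \<delta>_def using e C by simp
  show "\<exists>\<delta>>0. \<forall>x'\<in>UNIV. dist x' x < \<delta> \<longrightarrow> dist (f x') (f x) < e"
  proof (intro exI[of _ \<delta>] conjI ballI impI \<delta>)
    fix y assume "dist y x < \<delta>"
    then have yx: "\<bar>y - x\<bar> < \<delta>" by (simp add: dist_real_def)
    have "(f y - f x)^2 \<le> \<bar>y - x\<bar> * C" unfolding C_def by (rule holder_L2D[OF f])
    also have "\<dots> \<le> \<delta> * C" using yx C by (intro mult_right_mono) auto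
    also have "\<dots> < e^2"
    proof -
      have "\<delta> * C = e^2 * (C / (C + 1))" unfolding \<delta>_def by simp
      also have "\<dots> < e^2 * 1" using e C by (intro mult_strict_left_mono) auto
      finally show ?thesis by simp
    qed
    finally have "(f y - f x)^2 < e^2" .
    then have "sqrt ((f y - f x)^2) < sqrt (e^2)" by (rule real_sqrt_less_mono)
    then have "\<bar>f y - f x\<bar> < e" using e by simp
    then show "dist (f y) (f x) < e" by (simp add: dist_real_def)
  qed
qed

lemma eta0_min:
  obtains c where "0 < c" "\<And>y. y \<in> {-1..1} \<Longrightarrow> c \<le> eta0 y"
proof -
  have "\<exists>y0\<in>{-1..1::real}. \<forall>y\<in>{-1..1}. eta0 y0 \<le> eta0 y"
    by (rule continuous_attains_inf) (auto intro: continuous_on_subset[OF cont_eta0])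
  then obtain y0 where "\<forall>y\<in>{-1..1}. eta0 y0 \<le> eta0 y" by blast
  then show ?thesis using that[of "eta0 y0"] eta0_pos[of y0] by auto
qed

lemma pointwise_bound:
  obtains K where "0 < K" "\<And>f x. f \<in> Hreal \<Longrightarrow> (f x)^2 \<le> K * (1 + \<bar>x\<bar>) * ip0 f f"
proof -
  obtain c where c: "0 < c" "\<And>y. y \<in> {-1..1} \<Longrightarrow> c \<le> eta0 y" using eta0_min by blast
  define K where "K = 1 / c + 2"
  have "0 < 1 / c" using c(1) by simp
  then have K: "0 < K" unfolding K_def by linarith
  have "(f x)^2 \<le> K * (1 + \<bar>x\<bar>) * ip0 f f" if f: "f \<in> Hreal" for f x
  proof -
    note fD = Hreal_D[OF f]
    have [measurable]: "f \<in> borel_measurable lborel" using fD(4) .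
    have "\<exists>z\<in>{-1..1::real}. \<forall>y\<in>{-1..1}. (f z)^2 \<le> (f y)^2"
      by (rule continuous_attains_inf) (auto intro!: continuous_intros intro: continuous_on_subset[OF fD(2)])
    then obtain z where z: "z \<in> {-1..1}" "\<And>y. y \<in> {-1..1} \<Longrightarrow> (f z)^2 \<le> (f y)^2" by blast
    have ii: "integrable lborel (indicator {-1..1::real} :: real \<Rightarrow> real)"
      by (intro integrable_real_indicator) auto
    have i1: "integrable lborel (\<lambda>y. indicator {-1..1::real} y *\<^sub>R (c * (f z)^2))"
      using ii by (rule integrable_scaleR_left)
    have i2: "integrable lborel (\<lambda>y. indicator {-1..1::real} y *\<^sub>R (eta0 y * (f y)^2))"
      by (rule integrable_mult_indicator) (use fD(3) in auto)
    have "2 * (c * (f z)^2) = (\<integral>y. indicator {-1..1::real} y *\<^sub>R (c * (f z)^2) \<partial>lborel)"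
      by (subst integral_scaleR_left) (use ii in auto)
    also have "\<dots> \<le> (\<integral>y. indicator {-1..1::real} y *\<^sub>R (eta0 y * (f y)^2) \<partial>lborel)"
    proof (rule integral_mono[OF i1 i2])
      fix y show "indicator {-1..1::real} y *\<^sub>R (c * (f z)^2) \<le> indicator {-1..1::real} y *\<^sub>R (eta0 y * (f y)^2)"
        using c(2)[of y] z(2)[of y] c(1)
        by (auto simp: indicator_def intro!: mult_mono)
    qed
    also have "\<dots> \<le> (\<integral>y. eta0 y * (f y)^2 \<partial>lborel)"
      by (rule integral_mono[OF i2 fD(3)]) (auto simp: indicator_def eta0_nonneg)
    also have "\<dots> \<le> ip0 f f" by (rule ip0_ge_parts(2)[OF f])
    finally have fz: "(f z)^2 \<le> ip0 f f / (2 * c)" using c(1) by (simp add: field_simps)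
    have ip: "0 \<le> ip0 f f" by (rule ip0_ge_parts(3)[OF f])
    have hz: "(f x - f z)^2 \<le> \<bar>x - z\<bar> * ip0 f f" by (rule holder_Hreal[OF f])
    have xz: "\<bar>x - z\<bar> \<le> 1 + \<bar>x\<bar>" using z(1) by auto
    have "(f x)^2 \<le> 2 * (f z)^2 + 2 * (f x - f z)^2"
      using sum_squares_ge_zero[of "f x - 2 * f z" 0] by (simp add: power2_eq_square algebra_simps)
    also have "\<dots> \<le> 2 * (ip0 f f / (2 * c)) + 2 * ((1 + \<bar>x\<bar>) * ip0 f f)"
      using fz hz mult_right_mono[OF xz ip] by linarith
    also have "\<dots> = ip0 f f / c + 2 * (1 + \<bar>x\<bar>) * ip0 f f" using c(1) by simp
    also have "\<dots> \<le> (1 + \<bar>x\<bar>) * (ip0 f f / c) + 2 * (1 + \<bar>x\<bar>) * ip0 f f"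
    proof -
      have "1 * (ip0 f f / c) \<le> (1 + \<bar>x\<bar>) * (ip0 f f / c)"
        using ip c(1) by (intro mult_right_mono) auto
      then show ?thesis by simp
    qed
    also have "\<dots> = K * (1 + \<bar>x\<bar>) * ip0 f f" unfolding K_def by (simp add: algebra_simps add_divide_distrib)
    finally show ?thesis .
  qed
  then show ?thesis using that K by blast
qed

lemma norm0_nonneg: "f \<in> Hreal \<Longrightarrow> 0 \<le> norm0 f" unfolding norm0_def using ip0_ge_parts(3) by simp

lemma norm0_sq: assumes "f \<in> Hreal" shows "(norm0 f)^2 = ip0 f f"
  unfolding norm0_def using ip0_ge_parts(3)[OF assms] by (rule real_sqrt_pow2)

lemma norm0_zero:
  assumes f: "f \<in> Hreal" and z: "norm0 f = 0"
  shows "f x = 0"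
proof -
  obtain K where K: "0 < K" "\<And>f x. f \<in> Hreal \<Longrightarrow> (f x)^2 \<le> K * (1 + \<bar>x\<bar>) * ip0 f f"
    using pointwise_bound by blast
  have "ip0 f f = 0" using norm0_sq[OF f] z by simp
  then have "(f x)^2 \<le> 0" using K(2)[OF f, of x] by simp
  then show ?thesis by simp
qed

lemma norm0_add:
  assumes f: "f \<in> Hreal" and g: "g \<in> Hreal"
  shows "norm0 (\<lambda>x. f x + g x) \<le> norm0 f + norm0 g"
proof -
  have "ip0 (\<lambda>x. f x + g x) (\<lambda>x. f x + g x) = ip0 f f + 2 * ip0 f g + ip0 g g"
    using ip0_quad[OF f g, of 1 1] by simp
  also have "\<dots> \<le> (norm0 f)^2 + 2 * (norm0 f * norm0 g) + (norm0 g)^2"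
    using ip0_CS_abs[OF f g] norm0_sq[OF f] norm0_sq[OF g] by linarith
  also have "\<dots> = (norm0 f + norm0 g)^2" by (simp add: power2_eq_square algebra_simps)
  finally have "sqrt (ip0 (\<lambda>x. f x + g x) (\<lambda>x. f x + g x)) \<le> sqrt ((norm0 f + norm0 g)^2)"
    by (rule real_sqrt_le_mono)
  then show ?thesis unfolding norm0_def[of "\<lambda>x. f x + g x"]
    using norm0_nonneg[OF f] norm0_nonneg[OF g] by simp
qed

lemma norm0_tri:
  assumes f: "f \<in> Hreal" and g: "g \<in> Hreal" and h: "h \<in> Hreal"
  shows "norm0 (\<lambda>x. f x - h x) \<le> norm0 (\<lambda>x. f x - g x) + norm0 (\<lambda>x. g x - h x)"
proof -
  have u: "(\<lambda>x. 1 * f x + (-1) * g x) \<in> Hreal" by (rule Hreal_lin[OF f g])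
  have v: "(\<lambda>x. 1 * g x + (-1) * h x) \<in> Hreal" by (rule Hreal_lin[OF g h])
  have "norm0 (\<lambda>x. (f x - g x) + (g x - h x)) \<le> norm0 (\<lambda>x. f x - g x) + norm0 (\<lambda>x. g x - h x)"
    using norm0_add[OF u v] by simp
  then show ?thesis by simp
qed

lemma fatou_real:
  fixes g :: "nat \<Rightarrow> real \<Rightarrow> real"
  assumes [measurable]: "\<And>n. g n \<in> borel_measurable lborel" "G \<in> borel_measurable lborel"
    and nonneg: "\<And>n x. 0 \<le> g n x"
    and lim: "AE x in lborel. (\<lambda>n. g n x) \<longlonglongrightarrow> G x"
    and int: "\<And>n. integrable lborel (g n)"
    and bnd: "\<And>n. n \<ge> N \<Longrightarrow> (\<integral>x. g n x \<partial>lborel) \<le> C"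
  shows "integrable lborel G" "(\<integral>x. G x \<partial>lborel) \<le> C"
proof -
  have Gnn: "AE x in lborel. 0 \<le> G x"
    using lim by eventually_elim (rule LIMSEQ_le_const[OF _ ], auto simp: nonneg)
  have C: "0 \<le> C" using bnd[of N] nonneg
    by (meson Bochner_Integration.integral_nonneg order_trans order_refl)
  have "AE x in lborel. liminf (\<lambda>n. ennreal (g n x)) = ennreal (G x)"
    using lim by eventually_elim (intro lim_imp_Liminf, auto intro: tendsto_ennrealI)
  then have "(\<integral>\<^sup>+ x. ennreal (G x) \<partial>lborel) = (\<integral>\<^sup>+ x. liminf (\<lambda>n. ennreal (g n x)) \<partial>lborel)"
    by (intro nn_integral_cong_AE) (auto elim: eventually_mono)
  also have "\<dots> \<le> liminf (\<lambda>n. \<integral>\<^sup>+ x. ennreal (g n x) \<partial>lborel)"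
    by (intro nn_integral_liminf) auto
  also have "\<dots> \<le> ennreal C"
  proof (rule Liminf_le)
    show "\<forall>\<^sub>F n in sequentially. (\<integral>\<^sup>+ x. ennreal (g n x) \<partial>lborel) \<le> ennreal C"
      unfolding eventually_sequentially
    proof (intro exI[of _ N] allI impI)
      fix n assume "N \<le> n"
      have "(\<integral>\<^sup>+ x. ennreal (g n x) \<partial>lborel) = ennreal (\<integral>x. g n x \<partial>lborel)"
        by (intro nn_integral_eq_integral int) (auto simp: nonneg)
      also have "\<dots> \<le> ennreal C" using bnd[OF \<open>N \<le> n\<close>] by (rule ennreal_leI)
      finally show "(\<integral>\<^sup>+ x. ennreal (g n x) \<partial>lborel) \<le> ennreal C" .
    qed
  qed simp
  finally have le: "(\<integral>\<^sup>+ x. ennreal (G x) \<partial>lborel) \<le> ennreal C" .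
  then show i: "integrable lborel G"
    by (intro integrableI_nonneg Gnn) (auto simp: le_less_trans[OF le])
  have "(\<integral>x. G x \<partial>lborel) = enn2real (\<integral>\<^sup>+ x. ennreal (G x) \<partial>lborel)"
    by (rule integral_eq_nn_integral) (auto simp: Gnn)
  also have "\<dots> \<le> enn2real (ennreal C)"
    using le by (intro enn2real_mono) auto
  also have "\<dots> = C" using C by simp
  finally show "(\<integral>x. G x \<partial>lborel) \<le> C" .
qed

lemma integrable_sq_diff:
  fixes f g :: "'a \<Rightarrow> real"
  assumes [measurable]: "f \<in> borel_measurable M" "g \<in> borel_measurable M"
    and "integrable M (\<lambda>x. (f x)^2)" "integrable M (\<lambda>x. (g x)^2)"
  shows "integrable M (\<lambda>x. (f x - g x)^2)"
proof -
  have "integrable M (\<lambda>x. 2 * (f x)^2 + 2 * (g x)^2)" using assms by auto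
  then show ?thesis
  proof (rule Bochner_Integration.integrable_bound)
    show "AE x in M. norm ((f x - g x)^2) \<le> norm (2 * (f x)^2 + 2 * (g x)^2)"
    proof (intro AE_I2)
      fix x
      have "(f x - g x)^2 \<le> 2 * (f x)^2 + 2 * (g x)^2"
        using sum_squares_ge_zero[of "f x + g x" 0] by (simp add: power2_eq_square algebra_simps)
      then show "norm ((f x - g x)^2) \<le> norm (2 * (f x)^2 + 2 * (g x)^2)" by simp
    qed
  qed auto
qed

lemma abs_le_geom_aux:
  fixes a :: real
  shows "\<bar>a\<bar> \<le> 2^k * a^2 + (1/2)^k"
proof (cases "\<bar>a\<bar> \<le> (1/2)^k")
  case True
  then show ?thesis by (smt (verit) mult_nonneg_nonneg zero_le_power zero_le_power2)
next
  case False
  then have "1 < 2^k * \<bar>a\<bar>" by (simp add: power_one_over field_simps)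
  then have "1 * \<bar>a\<bar> \<le> (2^k * \<bar>a\<bar>) * \<bar>a\<bar>" by (intro mult_right_mono) auto
  also have "\<dots> = 2^k * a^2" by (simp add: power2_eq_square)
  finally have "\<bar>a\<bar> \<le> 2^k * a^2" by simp
  moreover have "0 \<le> (1/2::real)^k" by simp
  ultimately show ?thesis by linarith
qed

lemma conv_telescope:
  fixes u :: "nat \<Rightarrow> real"
  assumes "summable (\<lambda>k. \<bar>u (Suc k) - u k\<bar>)"
  shows "convergent u"
proof -
  have "summable (\<lambda>k. u (Suc k) - u k)" using assms by (rule summable_rabs_cancel)
  then have "convergent (\<lambda>k. \<Sum>i<k. u (Suc i) - u i)" by (simp add: summable_iff_convergent)
  then obtain L where L: "(\<lambda>k. \<Sum>i<k. u (Suc i) - u i) \<longlonglongrightarrow> L" unfolding convergent_def by blast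
  have "(\<lambda>k. u 0 + (\<Sum>i<k. u (Suc i) - u i)) \<longlonglongrightarrow> u 0 + L" by (rule tendsto_add[OF tendsto_const L])
  moreover have "(\<lambda>k. u 0 + (\<Sum>i<k. u (Suc i) - u i)) = u"
    by (simp add: sum_lessThan_telescope)
  ultimately show ?thesis by (metis convergentI)
qed

lemma L2_complete:
  fixes D :: "nat \<Rightarrow> real \<Rightarrow> real"
  assumes meas[measurable]: "\<And>n. D n \<in> borel_measurable lborel"
    and sq: "\<And>n. integrable lborel (\<lambda>x. (D n x)^2)"
    and cauchy: "\<And>e. e > 0 \<Longrightarrow> \<exists>N. \<forall>m\<ge>N. \<forall>n\<ge>N. (\<integral>x. (D m x - D n x)^2 \<partial>lborel) < e"
  shows "\<exists>d. d \<in> borel_measurable lborel \<and> integrable lborel (\<lambda>x. (d x)^2) \<and>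
           (\<lambda>n. \<integral>x. (D n x - d x)^2 \<partial>lborel) \<longlonglongrightarrow> 0"
proof -
  have sqd: "integrable lborel (\<lambda>x. (D m x - D n x)^2)" for m n
    by (rule integrable_sq_diff) (auto intro: sq)
  have "\<forall>k. \<exists>N. \<forall>m\<ge>N. \<forall>n\<ge>N. (\<integral>x. (D m x - D n x)^2 \<partial>lborel) < (1/4::real)^k"
    using cauchy by simp
  then obtain \<phi> where \<phi>: "\<And>k m n. m \<ge> \<phi> k \<Longrightarrow> n \<ge> \<phi> k \<Longrightarrow> (\<integral>x. (D m x - D n x)^2 \<partial>lborel) < (1/4::real)^k"
    by metis
  define r where "r k = (\<Sum>i\<le>k. \<phi> i) + k" for k
  have r_suc: "r (Suc k) = r k + \<phi> (Suc k) + 1" for k unfolding r_def by simp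
  have r_mono: "strict_mono r" unfolding strict_mono_Suc_iff using r_suc by simp
  have r_ge: "\<phi> k \<le> r k" for k
  proof -
    have "\<phi> k \<le> (\<Sum>i\<le>k. \<phi> i)" by (rule member_le_sum) auto
    then show ?thesis unfolding r_def by simp
  qed
  have r_ge2: "k \<le> r k" for k unfolding r_def by simp
  define a where "a k x = D (r (Suc k)) x - D (r k) x" for k x
  have a_meas[measurable]: "a k \<in> borel_measurable lborel" for k unfolding a_def by measurable
  have a_int: "integrable lborel (\<lambda>x. (a k x)^2)" for k unfolding a_def by (rule sqd)
  have a_small: "(\<integral>x. (a k x)^2 \<partial>lborel) < (1/4::real)^k" for k
    unfolding a_def
  proof (rule \<phi>)
    show "\<phi> k \<le> r (Suc k)" using r_ge[of k] r_mono by (meson le_trans less_imp_le_nat lessI strict_mono_less)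
  qed (rule r_ge)
  define S where "S x = (\<Sum>k. ennreal (2^k * (a k x)^2))" for x
  have S_meas[measurable]: "S \<in> borel_measurable lborel" unfolding S_def by measurable
  have "(\<integral>\<^sup>+x. S x \<partial>lborel) = (\<Sum>k. \<integral>\<^sup>+x. ennreal (2^k * (a k x)^2) \<partial>lborel)"
    unfolding S_def by (rule nn_integral_suminf) measurable
  also have "\<dots> \<le> (\<Sum>k. ennreal ((1/2)^k))"
  proof (intro suminf_le allI)
    fix k
    have "(\<integral>\<^sup>+x. ennreal (2^k * (a k x)^2) \<partial>lborel) = ennreal (\<integral>x. 2^k * (a k x)^2 \<partial>lborel)"
      by (intro nn_integral_eq_integral) (auto intro: a_int)
    also have "\<dots> \<le> ennreal ((1/2)^k)"
    proof (rule ennreal_leI)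
      have "(\<integral>x. 2^k * (a k x)^2 \<partial>lborel) = 2^k * (\<integral>x. (a k x)^2 \<partial>lborel)" by simp
      also have "\<dots> \<le> 2^k * (1/4)^k" using a_small[of k] by (intro mult_left_mono) auto
      also have "\<dots> = (1/2)^k" by (simp add: power_divide[symmetric] power_mult_distrib[symmetric])
      finally show "(\<integral>x. 2^k * (a k x)^2 \<partial>lborel) \<le> (1/2)^k" .
    qed
    finally show "(\<integral>\<^sup>+x. ennreal (2^k * (a k x)^2) \<partial>lborel) \<le> ennreal ((1/2)^k)" .
  qed auto
  also have "\<dots> = ennreal 2"
    by (subst suminf_ennreal2) (auto simp: suminf_geometric[of "1/2::real"] summable_geometric)
  finally have "(\<integral>\<^sup>+x. S x \<partial>lborel) \<noteq> \<infinity>" by (auto simp: top_unique)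
  then have AE_fin: "AE x in lborel. S x \<noteq> \<infinity>" by (intro nn_integral_PInf_AE) auto
  define Gd where "Gd = {x. S x \<noteq> \<infinity>}"
  have Gd_meas[measurable]: "Gd \<in> sets lborel" unfolding Gd_def by measurable
  have conv: "convergent (\<lambda>k. D (r k) x)" if "x \<in> Gd" for x
  proof -
    have "summable (\<lambda>k. 2^k * (a k x)^2)"
      using that unfolding Gd_def S_def by (intro summable_suminf_not_top) auto
    then have "summable (\<lambda>k. 2^k * (a k x)^2 + (1/2)^k)"
      by (intro summable_add) (auto simp: summable_geometric)
    then have "summable (\<lambda>k. \<bar>a k x\<bar>)"
      by (rule summable_comparison_test'[where N=0]) (auto simp: abs_le_geom_aux)
    then show ?thesis unfolding a_def by (rule conv_telescope[where u="\<lambda>k. D (r k) x"])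
  qed
  define d where "d x = lim (\<lambda>k. indicator Gd x * D (r k) x)" for x
  have dlim: "(\<lambda>k. indicator Gd x * D (r k) x) \<longlonglongrightarrow> d x" for x
  proof (cases "x \<in> Gd")
    case True
    then show ?thesis unfolding d_def using conv[OF True] by (simp add: convergent_LIMSEQ_iff)
  next
    case False
    then show ?thesis unfolding d_def by (simp add: limI)
  qed
  have d_meas[measurable]: "d \<in> borel_measurable lborel"
    by (rule borel_measurable_LIMSEQ_real[OF dlim]) measurable
  have AE_lim: "AE x in lborel. (\<lambda>k. D (r k) x) \<longlonglongrightarrow> d x"
    using AE_fin
  proof eventually_elim
    case (elim x)
    then have "x \<in> Gd" unfolding Gd_def by simp
    then show ?case using dlim[of x] by simp
  qed
  have key: "integrable lborel (\<lambda>x. (D n x - d x)^2) \<and> (\<integral>x. (D n x - d x)^2 \<partial>lborel) \<le> e"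
    if e: "e > 0" and N: "\<forall>m\<ge>N. \<forall>n\<ge>N. (\<integral>x. (D m x - D n x)^2 \<partial>lborel) < e" and n: "n \<ge> N" for e N n
  proof -
    have "AE x in lborel. (\<lambda>k. (D n x - D (r k) x)^2) \<longlonglongrightarrow> (D n x - d x)^2"
      using AE_lim by eventually_elim (intro tendsto_intros)
    moreover have "(\<integral>x. (D n x - D (r k) x)^2 \<partial>lborel) \<le> e" if "N \<le> k" for k
    proof -
      have "N \<le> r k" using r_ge2[of k] that by simp
      then show ?thesis using N n by (simp add: less_imp_le)
    qed
    ultimately show ?thesis
      using fatou_real[where N=N and C=e and g="\<lambda>k x. (D n x - D (r k) x)^2" and G="\<lambda>x. (D n x - d x)^2"]
      using sqd by auto
  qed
  obtain N1 where N1: "\<forall>m\<ge>N1. \<forall>n\<ge>N1. (\<integral>x. (D m x - D n x)^2 \<partial>lborel) < 1"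
    using cauchy[of 1] by auto
  have i1: "integrable lborel (\<lambda>x. (D N1 x - d x)^2)" using key[OF _ N1, of N1] by simp
  have "integrable lborel (\<lambda>x. (D N1 x - (D N1 x - d x))^2)"
    by (rule integrable_sq_diff) (auto intro: sq i1)
  then have d2: "integrable lborel (\<lambda>x. (d x)^2)" by simp
  have "(\<lambda>n. \<integral>x. (D n x - d x)^2 \<partial>lborel) \<longlonglongrightarrow> 0"
  proof (rule LIMSEQ_I)
    fix e :: real assume e: "0 < e"
    obtain N where N: "\<forall>m\<ge>N. \<forall>n\<ge>N. (\<integral>x. (D m x - D n x)^2 \<partial>lborel) < e / 2"
      using cauchy[of "e/2"] e by auto
    show "\<exists>no. \<forall>n\<ge>no. norm ((\<integral>x. (D n x - d x)^2 \<partial>lborel) - 0) < e"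
    proof (intro exI[of _ N] allI impI)
      fix n assume "N \<le> n"
      then have "(\<integral>x. (D n x - d x)^2 \<partial>lborel) \<le> e / 2" using key[OF _ N] e by simp
      moreover have "0 \<le> (\<integral>x. (D n x - d x)^2 \<partial>lborel)" by simp
      ultimately show "norm ((\<integral>x. (D n x - d x)^2 \<partial>lborel) - 0) < e" using e by simp
    qed
  qed
  then show ?thesis using d_meas d2 by blast
qed

lemma Hreal_diff:
  assumes "f \<in> Hreal" "g \<in> Hreal"
  shows "(\<lambda>x. f x - g x) \<in> Hreal"
  using Hreal_lin[OF assms, of 1 "-1"] by simp

lemma L2D_diff:
  assumes "is_L2_deriv f d" "is_L2_deriv g e"
  shows "is_L2_deriv (\<lambda>x. f x - g x) (\<lambda>x. d x - e x)"
  using L2D_lin[OF assms, of 1 "-1"] by simp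

lemma ip0_self_L2D:
  assumes "is_L2_deriv f d"
  shows "ip0 f f = (\<integral>x. (d x)^2 \<partial>lborel) + (\<integral>x. eta0 x * (f x)^2 \<partial>lborel)"
  using ip0_eq[OF assms assms] by (simp add: power2_eq_square mult.assoc)

lemma interval_CS:
  fixes g :: "real \<Rightarrow> real"
  assumes [measurable]: "g \<in> borel_measurable lborel" and g2: "integrable lborel (\<lambda>x. (g x)^2)"
    and ab: "a \<le> b"
  shows "set_integrable lborel {a..b} g" "(LINT x:{a..b}|lborel. g x)^2 \<le> (b - a) * (\<integral>x. (g x)^2 \<partial>lborel)"
proof -
  have "integrable lborel (\<lambda>x. indicator {a..b} x + (g x)^2)"
    using g2 ab by (intro Bochner_Integration.integrable_add integrable_real_indicator) auto
  then have "integrable lborel (\<lambda>x. indicator {a..b} x *\<^sub>R g x)"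
  proof (rule Bochner_Integration.integrable_bound)
    show "AE x in lborel. norm (indicator {a..b} x *\<^sub>R g x) \<le> norm (indicator {a..b} x + (g x)^2)"
    proof (intro AE_I2)
      fix x
      have "\<bar>g x\<bar> \<le> 1 + (g x)^2"
      proof (cases "\<bar>g x\<bar> \<le> 1")
        case True then show ?thesis by (smt (verit) zero_le_power2)
      next
        case False
        then have "\<bar>g x\<bar> * 1 \<le> \<bar>g x\<bar> * \<bar>g x\<bar>" by (intro mult_left_mono) auto
        then show ?thesis by (simp add: power2_eq_square abs_mult_self)
      qed
      then show "norm (indicator {a..b} x *\<^sub>R g x) \<le> norm (indicator {a..b} x + (g x)^2)"
        by (auto simp: indicator_def)
    qed
  qed auto
  then show si: "set_integrable lborel {a..b} g" unfolding set_integrable_def .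
  define u where "u = (\<lambda>x::real. indicator {a..b} x :: real)"
  define v where "v = (\<lambda>x. indicator {a..b} x * g x)"
  have [measurable]: "u \<in> borel_measurable lborel" "v \<in> borel_measurable lborel"
    unfolding u_def v_def by measurable
  have u2: "(\<lambda>x. (u x)^2) = u" unfolding u_def by (auto simp: indicator_def)
  have "integrable lborel u" unfolding u_def by (intro integrable_real_indicator) (use ab in auto)
  then have u2i: "integrable lborel (\<lambda>x. (u x)^2)" using u2 by simp
  have v2: "(\<lambda>x. (v x)^2) = (\<lambda>x. indicator {a..b} x *\<^sub>R (g x)^2)"
    unfolding v_def by (auto simp: indicator_def fun_eq_iff)
  have v2i: "integrable lborel (\<lambda>x. (v x)^2)" unfolding v2
    by (rule integrable_mult_indicator) (use g2 in auto)
  have uv: "(\<lambda>x. u x * v x) = (\<lambda>x. indicator {a..b} x *\<^sub>R g x)"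
    unfolding u_def v_def by (auto simp: indicator_def fun_eq_iff)
  have "(LINT x:{a..b}|lborel. g x)^2 = (\<integral>x. u x * v x \<partial>lborel)^2"
    unfolding uv set_lebesgue_integral_def ..
  also have "\<dots> \<le> (\<integral>x. (u x)^2 \<partial>lborel) * (\<integral>x. (v x)^2 \<partial>lborel)"
    by (rule integral_CS) (use u2i v2i in auto)
  also have "(\<integral>x. (u x)^2 \<partial>lborel) = b - a"
  proof -
    have "(\<integral>x. (u x)^2 \<partial>lborel) = (\<integral>x. u x \<partial>lborel)" using u2 by metis
    also have "\<dots> = b - a" unfolding u_def using ab by simp
    finally show ?thesis .
  qed
  also have "(\<integral>x. (v x)^2 \<partial>lborel) \<le> (\<integral>x. (g x)^2 \<partial>lborel)"
    by (rule integral_mono[OF v2i g2]) (simp add: v_def indicator_def)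
  finally show "(LINT x:{a..b}|lborel. g x)^2 \<le> (b - a) * (\<integral>x. (g x)^2 \<partial>lborel)"
    using ab by (simp add: mult_left_mono)
qed

lemma Hreal_complete:
  fixes s :: "nat \<Rightarrow> real \<Rightarrow> real"
  assumes s: "\<And>n. s n \<in> Hreal"
    and cauchy: "\<And>e. e > 0 \<Longrightarrow> \<exists>N. \<forall>m\<ge>N. \<forall>n\<ge>N. norm0 (\<lambda>x. s m x - s n x) < e"
  shows "\<exists>F\<in>Hreal. (\<lambda>n. norm0 (\<lambda>x. s n x - F x)) \<longlonglongrightarrow> 0"
proof -
  define Ds where "Ds n = wderiv (s n)" for n
  have sL: "is_L2_deriv (s n) (Ds n)" for n unfolding Ds_def using Hreal_D(1)[OF s] .
  have Ds_meas[measurable]: "Ds n \<in> borel_measurable lborel" for n using L2D_meas[OF sL] .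
  have s_meas[measurable]: "s n \<in> borel_measurable lborel" for n using Hreal_D(4)[OF s] .
  have Ds2: "integrable lborel (\<lambda>x. (Ds n x)^2)" for n using L2D_sq[OF sL] .
  have s_eta: "integrable lborel (\<lambda>x. eta0 x * (s n x)^2)" for n using Hreal_D(3)[OF s] .
  have ipd: "ip0 (\<lambda>x. s m x - s n x) (\<lambda>x. s m x - s n x)
      = (\<integral>x. (Ds m x - Ds n x)^2 \<partial>lborel) + (\<integral>x. eta0 x * (s m x - s n x)^2 \<partial>lborel)" for m n
    by (rule ip0_self_L2D[OF L2D_diff[OF sL sL]])
  have nsq: "(norm0 (\<lambda>x. s m x - s n x))^2 = ip0 (\<lambda>x. s m x - s n x) (\<lambda>x. s m x - s n x)" for m n
    by (rule norm0_sq[OF Hreal_diff[OF s s]])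
  have partD: "(\<integral>x. (Ds m x - Ds n x)^2 \<partial>lborel) \<le> (norm0 (\<lambda>x. s m x - s n x))^2" for m n
  proof -
    have "0 \<le> (\<integral>x. eta0 x * (s m x - s n x)^2 \<partial>lborel)" by (simp add: eta0_nonneg)
    then show ?thesis using ipd[of m n] nsq[of m n] by linarith
  qed
  have partE: "(\<integral>x. eta0 x * (s m x - s n x)^2 \<partial>lborel) \<le> (norm0 (\<lambda>x. s m x - s n x))^2" for m n
  proof -
    have "0 \<le> (\<integral>x. (Ds m x - Ds n x)^2 \<partial>lborel)" by simp
    then show ?thesis using ipd[of m n] nsq[of m n] by linarith
  qed
  have cauchy2: "\<exists>N. \<forall>m\<ge>N. \<forall>n\<ge>N. (norm0 (\<lambda>x. s m x - s n x))^2 < e" if e: "e > 0" for e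
  proof -
    obtain N where N: "\<forall>m\<ge>N. \<forall>n\<ge>N. norm0 (\<lambda>x. s m x - s n x) < sqrt e"
      using cauchy[of "sqrt e"] e by auto
    have "(norm0 (\<lambda>x. s m x - s n x))^2 < e" if "m \<ge> N" "n \<ge> N" for m n
    proof -
      have a: "0 \<le> norm0 (\<lambda>x. s m x - s n x)" by (rule norm0_nonneg[OF Hreal_diff[OF s s]])
      have "norm0 (\<lambda>x. s m x - s n x) < sqrt e" using N that by auto
      then have "(norm0 (\<lambda>x. s m x - s n x))^2 < (sqrt e)^2"
        using a by (intro power_strict_mono) auto
      then show ?thesis using e by simp
    qed
    then show ?thesis by blast
  qed
  have "\<exists>d. d \<in> borel_measurable lborel \<and> integrable lborel (\<lambda>x. (d x)^2) \<and>
           (\<lambda>n. \<integral>x. (Ds n x - d x)^2 \<partial>lborel) \<longlonglongrightarrow> 0"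
  proof (rule L2_complete[OF Ds_meas Ds2])
    fix e :: real assume "e > 0"
    then obtain N where N: "\<forall>m\<ge>N. \<forall>n\<ge>N. (norm0 (\<lambda>x. s m x - s n x))^2 < e" using cauchy2 by blast
    show "\<exists>N. \<forall>m\<ge>N. \<forall>n\<ge>N. (\<integral>x. (Ds m x - Ds n x)^2 \<partial>lborel) < e"
      using N partD le_less_trans by blast
  qed
  then obtain d where d_meas[measurable]: "d \<in> borel_measurable lborel"
    and d2: "integrable lborel (\<lambda>x. (d x)^2)"
    and dlim: "(\<lambda>n. \<integral>x. (Ds n x - d x)^2 \<partial>lborel) \<longlonglongrightarrow> 0" by blast
  obtain K where K: "0 < K" "\<And>f x. f \<in> Hreal \<Longrightarrow> (f x)^2 \<le> K * (1 + \<bar>x\<bar>) * ip0 f f"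
    using pointwise_bound by blast
  have pw: "Cauchy (\<lambda>n. s n x)" for x
  proof (rule metric_CauchyI)
    fix e :: real assume e: "0 < e"
    define c where "c = K * (1 + \<bar>x\<bar>)"
    have c: "0 < c" unfolding c_def using K(1) by (simp add: add_pos_nonneg)
    obtain N where N: "\<forall>m\<ge>N. \<forall>n\<ge>N. (norm0 (\<lambda>x. s m x - s n x))^2 < e^2 / c"
      using cauchy2[of "e^2 / c"] e c by auto
    have "dist (s m x) (s n x) < e" if "m \<ge> N" "n \<ge> N" for m n
    proof -
      have "(s m x - s n x)^2 \<le> c * ip0 (\<lambda>x. s m x - s n x) (\<lambda>x. s m x - s n x)"
        using K(2)[OF Hreal_diff[OF s[of m] s[of n]], of x] unfolding c_def by simp
      also have "\<dots> = c * (norm0 (\<lambda>x. s m x - s n x))^2" using nsq by simp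
      also have "\<dots> < c * (e^2 / c)" using N that c by (intro mult_strict_left_mono) auto
      also have "\<dots> = e^2" using c by simp
      finally have "sqrt ((s m x - s n x)^2) < sqrt (e^2)" by (rule real_sqrt_less_mono)
      then show ?thesis using e by (simp add: dist_real_def)
    qed
    then show "\<exists>N. \<forall>m\<ge>N. \<forall>n\<ge>N. dist (s m x) (s n x) < e" by blast
  qed
  define F where "F x = lim (\<lambda>n. s n x)" for x
  have Flim: "(\<lambda>n. s n x) \<longlonglongrightarrow> F x" for x
    unfolding F_def using pw[of x] by (simp add: Cauchy_convergent_iff convergent_LIMSEQ_iff)
  have F_meas[measurable]: "F \<in> borel_measurable lborel"
    by (rule borel_measurable_LIMSEQ_real[OF Flim]) simp
  have FL: "is_L2_deriv F d"
    unfolding is_L2_deriv_def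
  proof (intro conjI allI impI d_meas d2)
    fix a b :: real assume ab: "a \<le> b"
    show "set_integrable lborel {a..b} d" by (rule interval_CS(1)[OF d_meas d2 ab])
    have lim1: "(\<lambda>n. s n b - s n a) \<longlonglongrightarrow> F b - F a" by (intro tendsto_diff Flim)
    have eq: "s n b - s n a = (LINT x:{a..b}|lborel. Ds n x)" for n
      using sL[of n] ab unfolding is_L2_deriv_def by auto
    have si: "set_integrable lborel {a..b} (Ds n)" for n
      using sL[of n] ab unfolding is_L2_deriv_def by auto
    have sid: "set_integrable lborel {a..b} d" by (rule interval_CS(1)[OF d_meas d2 ab])
    have "(\<lambda>n. (LINT x:{a..b}|lborel. Ds n x - d x)) \<longlonglongrightarrow> 0"
    proof (rule Lim_null_comparison)
      show "\<forall>\<^sub>F n in sequentially. norm (LINT x:{a..b}|lborel. Ds n x - d x) \<le> sqrt ((b - a) * (\<integral>x. (Ds n x - d x)^2 \<partial>lborel))"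
      proof (intro always_eventually allI)
        fix n
        have "(LINT x:{a..b}|lborel. Ds n x - d x)^2 \<le> (b - a) * (\<integral>x. (Ds n x - d x)^2 \<partial>lborel)"
          by (rule interval_CS(2)[OF _ integrable_sq_diff ab]) (auto intro: Ds2 d2)
        then have "sqrt ((LINT x:{a..b}|lborel. Ds n x - d x)^2) \<le> sqrt ((b - a) * (\<integral>x. (Ds n x - d x)^2 \<partial>lborel))"
          by (rule real_sqrt_le_mono)
        then show "norm (LINT x:{a..b}|lborel. Ds n x - d x) \<le> sqrt ((b - a) * (\<integral>x. (Ds n x - d x)^2 \<partial>lborel))"
          by simp
      qed
      have "(\<lambda>n. sqrt ((b - a) * (\<integral>x. (Ds n x - d x)^2 \<partial>lborel))) \<longlonglongrightarrow> sqrt ((b - a) * 0)"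
        by (intro tendsto_intros dlim)
      then show "(\<lambda>n. sqrt ((b - a) * (\<integral>x. (Ds n x - d x)^2 \<partial>lborel))) \<longlonglongrightarrow> 0" by simp
    qed
    moreover have "(LINT x:{a..b}|lborel. Ds n x - d x) = (s n b - s n a) - (LINT x:{a..b}|lborel. d x)" for n
      using eq[of n] si[of n] sid by (simp add: set_integral_diff(2))
    ultimately have "(\<lambda>n. (s n b - s n a) - (LINT x:{a..b}|lborel. d x)) \<longlonglongrightarrow> 0" by simp
    then have "(\<lambda>n. ((s n b - s n a) - (LINT x:{a..b}|lborel. d x)) + (LINT x:{a..b}|lborel. d x)) \<longlonglongrightarrow> 0 + (LINT x:{a..b}|lborel. d x)"
      by (rule tendsto_add[OF _ tendsto_const])
    then have lim2: "(\<lambda>n. s n b - s n a) \<longlonglongrightarrow> (LINT x:{a..b}|lborel. d x)" by simp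
    show "F b - F a = (LINT x:{a..b}|lborel. d x)" using LIMSEQ_unique[OF lim1 lim2] .
  qed
  have Fcont: "continuous_on UNIV F" by (rule L2D_cont[OF FL])
  have eta_key: "integrable lborel (\<lambda>x. eta0 x * (s n x - F x)^2) \<and> (\<integral>x. eta0 x * (s n x - F x)^2 \<partial>lborel) \<le> e"
    if e: "e > 0" and N: "\<forall>m\<ge>N. \<forall>n\<ge>N. (norm0 (\<lambda>x. s m x - s n x))^2 < e" and n: "n \<ge> N" for e N n
  proof -
    have lim: "AE x in lborel. (\<lambda>m. eta0 x * (s n x - s m x)^2) \<longlonglongrightarrow> eta0 x * (s n x - F x)^2"
      by (intro AE_I2 tendsto_intros Flim)
    have int: "integrable lborel (\<lambda>x. eta0 x * (s n x - s m x)^2)" for m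
      using Hreal_D(3)[OF Hreal_diff[OF s s]] by simp
    have bnd: "(\<integral>x. eta0 x * (s n x - s m x)^2 \<partial>lborel) \<le> e" if "N \<le> m" for m
      using partE[of n m] N n that by (meson less_imp_le order_trans)
    show ?thesis
      using fatou_real[where N=N and C=e and g="\<lambda>m x. eta0 x * (s n x - s m x)^2" and G="\<lambda>x. eta0 x * (s n x - F x)^2"]
      using lim int bnd by (auto simp: eta0_nonneg)
  qed
  obtain N1 where N1: "\<forall>m\<ge>N1. \<forall>n\<ge>N1. (norm0 (\<lambda>x. s m x - s n x))^2 < 1" using cauchy2[of 1] by auto
  have i1: "integrable lborel (\<lambda>x. eta0 x * (s N1 x - F x)^2)" using eta_key[OF _ N1, of N1] by simp
  have Feta: "integrable lborel (\<lambda>x. eta0 x * (F x)^2)"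
  proof -
    have "integrable lborel (\<lambda>x. 2 * (eta0 x * (s N1 x)^2) + 2 * (eta0 x * (s N1 x - F x)^2))"
      using i1 s_eta[of N1] by auto
    then show ?thesis
    proof (rule Bochner_Integration.integrable_bound)
      show "AE x in lborel. norm (eta0 x * (F x)^2) \<le> norm (2 * (eta0 x * (s N1 x)^2) + 2 * (eta0 x * (s N1 x - F x)^2))"
      proof (intro AE_I2)
        fix x
        have "(F x)^2 \<le> 2 * (s N1 x)^2 + 2 * (s N1 x - F x)^2"
          using sum_squares_ge_zero[of "2 * s N1 x - F x" 0] by (simp add: power2_eq_square algebra_simps)
        then have "eta0 x * (F x)^2 \<le> eta0 x * (2 * (s N1 x)^2 + 2 * (s N1 x - F x)^2)"
          by (rule mult_left_mono) (simp add: eta0_nonneg)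
        then show "norm (eta0 x * (F x)^2) \<le> norm (2 * (eta0 x * (s N1 x)^2) + 2 * (eta0 x * (s N1 x - F x)^2))"
          by (simp add: eta0_nonneg algebra_simps)
      qed
    qed auto
  qed
  have FH: "F \<in> Hreal" by (rule Hreal_I[OF Fcont FL Feta])
  have etalim: "(\<lambda>n. \<integral>x. eta0 x * (s n x - F x)^2 \<partial>lborel) \<longlonglongrightarrow> 0"
  proof (rule LIMSEQ_I)
    fix e :: real assume e: "0 < e"
    obtain N where N: "\<forall>m\<ge>N. \<forall>n\<ge>N. (norm0 (\<lambda>x. s m x - s n x))^2 < e / 2"
      using cauchy2[of "e/2"] e by auto
    show "\<exists>no. \<forall>n\<ge>no. norm ((\<integral>x. eta0 x * (s n x - F x)^2 \<partial>lborel) - 0) < e"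
    proof (intro exI[of _ N] allI impI)
      fix n assume "N \<le> n"
      then have "(\<integral>x. eta0 x * (s n x - F x)^2 \<partial>lborel) \<le> e / 2" using eta_key[OF _ N] e by simp
      moreover have "0 \<le> (\<integral>x. eta0 x * (s n x - F x)^2 \<partial>lborel)" by (simp add: eta0_nonneg)
      ultimately show "norm ((\<integral>x. eta0 x * (s n x - F x)^2 \<partial>lborel) - 0) < e" using e by simp
    qed
  qed
  have "ip0 (\<lambda>x. s n x - F x) (\<lambda>x. s n x - F x)
      = (\<integral>x. (Ds n x - d x)^2 \<partial>lborel) + (\<integral>x. eta0 x * (s n x - F x)^2 \<partial>lborel)" for n
    by (rule ip0_self_L2D[OF L2D_diff[OF sL FL]])
  moreover have "(\<lambda>n. (\<integral>x. (Ds n x - d x)^2 \<partial>lborel) + (\<integral>x. eta0 x * (s n x - F x)^2 \<partial>lborel)) \<longlonglongrightarrow> 0 + 0"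
    by (rule tendsto_add[OF dlim etalim])
  ultimately have "(\<lambda>n. ip0 (\<lambda>x. s n x - F x) (\<lambda>x. s n x - F x)) \<longlonglongrightarrow> 0" by simp
  then have "(\<lambda>n. sqrt (ip0 (\<lambda>x. s n x - F x) (\<lambda>x. s n x - F x))) \<longlonglongrightarrow> sqrt 0"
    by (rule tendsto_real_sqrt)
  then have "(\<lambda>n. norm0 (\<lambda>x. s n x - F x)) \<longlonglongrightarrow> 0" unfolding norm0_def by simp
  then show ?thesis using FH by blast
qed

lemma wCS:
  fixes f g :: "real \<Rightarrow> real"
  assumes [measurable]: "f \<in> borel_measurable lborel" "g \<in> borel_measurable lborel"
    and fi: "integrable lborel (\<lambda>x. eta0 x * (f x)^2)" and gi: "integrable lborel (\<lambda>x. eta0 x * (g x)^2)"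
  shows "(\<integral>x. eta0 x * f x * g x \<partial>lborel)^2 \<le> (\<integral>x. eta0 x * (f x)^2 \<partial>lborel) * (\<integral>x. eta0 x * (g x)^2 \<partial>lborel)"
proof -
  have e: "sqrt (eta0 x) * sqrt (eta0 x) = eta0 x" for x using eta0_nonneg[of x] by simp
  have sq: "(sqrt (eta0 x) * h)^2 = eta0 x * h^2" for x h using eta0_nonneg[of x]
    by (simp add: power_mult_distrib)
  have pr: "(sqrt (eta0 x) * f x) * (sqrt (eta0 x) * g x) = eta0 x * f x * g x" for x
    using e[of x] by (simp add: algebra_simps)
  have "(\<integral>x. (sqrt (eta0 x) * f x) * (sqrt (eta0 x) * g x) \<partial>lborel)^2
      \<le> (\<integral>x. (sqrt (eta0 x) * f x)^2 \<partial>lborel) * (\<integral>x. (sqrt (eta0 x) * g x)^2 \<partial>lborel)"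
    by (rule integral_CS) (auto simp: sq fi gi)
  then show ?thesis by (simp add: sq pr)
qed

lemma zero_Hreal: "(\<lambda>x. 0) \<in> Hreal"
proof (rule Hreal_I)
  show "is_L2_deriv (\<lambda>x. 0) (\<lambda>x. 0)" unfolding is_L2_deriv_def by (simp add: set_integrable_def)
qed auto

lemma lin_aux: "(p::real) < z + a \<Longrightarrow> q < z + b \<Longrightarrow> z \<le> w \<Longrightarrow> 2*p+2*q-4*w \<le> 2*(z+a)+2*(z+b)-4*z"
  by (smt (verit))

lemma lim_inv_n: "(\<lambda>n. 1 / (real n + 1)) \<longlonglongrightarrow> 0"
  using LIMSEQ_inverse_real_of_nat by (simp add: inverse_eq_divide add.commute)

lemma riesz:
  fixes F :: "real \<Rightarrow> real"
  assumes [measurable]: "F \<in> borel_measurable lborel" and FI: "integrable lborel (\<lambda>x. eta0 x * (F x)^2)"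
  shows "\<exists>u\<in>Hreal. \<forall>g\<in>Hreal. ip0 u g = (\<integral>x. eta0 x * F x * g x \<partial>lborel)"
proof -
  define L where "L g = (\<integral>x. eta0 x * F x * g x \<partial>lborel)" for g :: "real \<Rightarrow> real"
  define A where "A = (\<integral>x. eta0 x * (F x)^2 \<partial>lborel)"
  have A: "0 \<le> A" unfolding A_def by (simp add: eta0_nonneg)
  have Lint: "integrable lborel (\<lambda>x. eta0 x * F x * g x)" if "g \<in> Hreal" for g
    using Hreal_D[OF that] FI by (intro integrable_wprod_sq) (auto simp: eta0_nonneg)
  have Llin: "L (\<lambda>x. a * f x + b * g x) = a * L f + b * L g" if "f \<in> Hreal" "g \<in> Hreal" for a b f g
  proof -
    have "L (\<lambda>x. a * f x + b * g x) = (\<integral>x. a * (eta0 x * F x * f x) + b * (eta0 x * F x * g x) \<partial>lborel)"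
      unfolding L_def by (simp add: algebra_simps)
    also have "\<dots> = (\<integral>x. a * (eta0 x * F x * f x) \<partial>lborel) + (\<integral>x. b * (eta0 x * F x * g x) \<partial>lborel)"
      using Lint[OF that(1)] Lint[OF that(2)] by (intro Bochner_Integration.integral_add) auto
    finally show ?thesis unfolding L_def by simp
  qed
  have Lbnd: "\<bar>L g\<bar> \<le> sqrt A * norm0 g" if g: "g \<in> Hreal" for g
  proof -
    have "(L g)^2 \<le> A * (\<integral>x. eta0 x * (g x)^2 \<partial>lborel)"
      unfolding L_def A_def using Hreal_D[OF g] by (intro wCS FI) auto
    also have "\<dots> \<le> A * ip0 g g" using A ip0_ge_parts(2)[OF g] by (rule mult_left_mono[rotated])
    finally have "sqrt ((L g)^2) \<le> sqrt (A * ip0 g g)" by (rule real_sqrt_le_mono)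
    then show ?thesis unfolding norm0_def by (simp add: real_sqrt_mult)
  qed
  define J where "J g = ip0 g g - 2 * L g" for g
  have Jlow: "- A \<le> J g" if g: "g \<in> Hreal" for g
  proof -
    have p: "ip0 g g = (norm0 g)^2" using norm0_sq[OF g] by simp
    have "0 \<le> (norm0 g - sqrt A)^2" by simp
    then have "0 \<le> (norm0 g)^2 - 2 * (sqrt A * norm0 g) + A" using A by (simp add: power2_diff mult_ac)
    moreover have "L g \<le> sqrt A * norm0 g" using Lbnd[OF g] by simp
    ultimately show ?thesis unfolding J_def p by linarith
  qed
  define m where "m = Inf (J ` Hreal)"
  have bdd: "bdd_below (J ` Hreal)" using Jlow by (intro bdd_belowI[of _ "- A"]) auto
  have ne: "J ` Hreal \<noteq> {}" using zero_Hreal by auto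
  have m_le: "m \<le> J g" if "g \<in> Hreal" for g unfolding m_def using bdd that by (intro cInf_lower) auto
  have "\<exists>u. u \<in> Hreal \<and> J u < m + 1 / (real n + 1)" for n
  proof -
    have "Inf (J ` Hreal) < m + 1 / (real n + 1)" unfolding m_def by simp
    then obtain y where "y \<in> J ` Hreal" "y < m + 1 / (real n + 1)" using cInf_lessD[OF ne] by blast
    then show ?thesis by auto
  qed
  then obtain u where uH: "\<And>n. u n \<in> Hreal" and uJ: "\<And>n. J (u n) < m + 1 / (real n + 1)" by metis
  have par: "ip0 (\<lambda>x. v x - w x) (\<lambda>x. v x - w x) = 2 * J v + 2 * J w - 4 * J (\<lambda>x. (1/2) * v x + (1/2) * w x)"
    if v: "v \<in> Hreal" and w: "w \<in> Hreal" for v w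
  proof -
    have "ip0 (\<lambda>x. v x - w x) (\<lambda>x. v x - w x) = ip0 v v - 2 * ip0 v w + ip0 w w"
      using ip0_quad[OF v w, of 1 "-1"] by simp
    moreover have "ip0 (\<lambda>x. (1/2) * v x + (1/2) * w x) (\<lambda>x. (1/2) * v x + (1/2) * w x)
       = (1/4) * ip0 v v + (1/2) * ip0 v w + (1/4) * ip0 w w"
      using ip0_quad[OF v w, of "1/2" "1/2"] by (simp add: power2_eq_square)
    moreover have "L (\<lambda>x. (1/2) * v x + (1/2) * w x) = (1/2) * L v + (1/2) * L w"
      by (rule Llin[OF v w])
    ultimately show ?thesis unfolding J_def by (simp add: algebra_simps)
  qed
  have ucauchy: "(norm0 (\<lambda>x. u i x - u j x))^2 \<le> 2 / (real i + 1) + 2 / (real j + 1)" for i j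
  proof -
    have mid: "(\<lambda>x. (1/2) * u i x + (1/2) * u j x) \<in> Hreal" by (rule Hreal_lin[OF uH uH])
    define Jw where "Jw = J (\<lambda>x. (1/2) * u i x + (1/2) * u j x)"
    have mw: "m \<le> Jw" unfolding Jw_def by (rule m_le[OF mid])
    have "(norm0 (\<lambda>x. u i x - u j x))^2 = 2 * J (u i) + 2 * J (u j) - 4 * Jw"
      unfolding Jw_def using norm0_sq[OF Hreal_diff[OF uH uH]] par[OF uH uH] by simp
    also have "\<dots> \<le> 2 * (m + 1 / (real i + 1)) + 2 * (m + 1 / (real j + 1)) - 4 * m"
      using lin_aux[OF uJ[of i] uJ[of j] mw] .
    finally show ?thesis by simp
  qed
  have "\<exists>u0\<in>Hreal. (\<lambda>n. norm0 (\<lambda>x. u n x - u0 x)) \<longlonglongrightarrow> 0"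
  proof (rule Hreal_complete[OF uH])
    fix e :: real assume e: "e > 0"
    obtain N :: nat where N: "4 / e^2 < real N" using reals_Archimedean2 by blast
    have "norm0 (\<lambda>x. u i x - u j x) < e" if "i \<ge> N" "j \<ge> N" for i j
    proof -
      have e2: "0 < e^2" using e by simp
      have "2 / (real i + 1) \<le> 2 / (real N + 1)" using that by (intro divide_left_mono) auto
      moreover have "2 / (real j + 1) \<le> 2 / (real N + 1)" using that by (intro divide_left_mono) auto
      moreover have "4 / (real N + 1) < e^2"
      proof -
        have "4 / e^2 < real N + 1" using N by simp
        then show ?thesis using e2 by (simp add: divide_less_eq mult.commute)
      qed
      ultimately have "(norm0 (\<lambda>x. u i x - u j x))^2 < e^2" using ucauchy[of i j] by simp
      then have "sqrt ((norm0 (\<lambda>x. u i x - u j x))^2) < sqrt (e^2)" by (rule real_sqrt_less_mono)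
      then show ?thesis using e norm0_nonneg[OF Hreal_diff[OF uH uH]] by simp
    qed
    then show "\<exists>N. \<forall>m\<ge>N. \<forall>n\<ge>N. norm0 (\<lambda>x. u m x - u n x) < e" by blast
  qed
  then obtain u0 where u0: "u0 \<in> Hreal" and ulim: "(\<lambda>n. norm0 (\<lambda>x. u n x - u0 x)) \<longlonglongrightarrow> 0" by blast
  have "ip0 u0 g = L g" if g: "g \<in> Hreal" for g
  proof -
    have iplim: "(\<lambda>n. ip0 (u n) g) \<longlonglongrightarrow> ip0 u0 g"
    proof -
      have "(\<lambda>n. ip0 (u n) g - ip0 u0 g) \<longlonglongrightarrow> 0"
      proof (rule Lim_null_comparison)
        show "\<forall>\<^sub>F n in sequentially. norm (ip0 (u n) g - ip0 u0 g) \<le> norm0 (\<lambda>x. u n x - u0 x) * norm0 g"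
        proof (intro always_eventually allI)
          fix n
          have "ip0 (\<lambda>x. 1 * u n x + (-1) * u0 x) g = 1 * ip0 (u n) g + (-1) * ip0 u0 g"
            by (rule ip0_lin[OF uH u0 g])
          then have "ip0 (u n) g - ip0 u0 g = ip0 (\<lambda>x. u n x - u0 x) g" by simp
          then show "norm (ip0 (u n) g - ip0 u0 g) \<le> norm0 (\<lambda>x. u n x - u0 x) * norm0 g"
            using ip0_CS_abs[OF Hreal_diff[OF uH u0] g] by simp
        qed
        have "(\<lambda>n. norm0 (\<lambda>x. u n x - u0 x) * norm0 g) \<longlonglongrightarrow> 0 * norm0 g"
          by (rule tendsto_mult[OF ulim tendsto_const])
        then show "(\<lambda>n. norm0 (\<lambda>x. u n x - u0 x) * norm0 g) \<longlonglongrightarrow> 0" by simp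
      qed
      then have "(\<lambda>n. (ip0 (u n) g - ip0 u0 g) + ip0 u0 g) \<longlonglongrightarrow> 0 + ip0 u0 g"
        by (rule tendsto_add[OF _ tendsto_const])
      then show ?thesis by simp
    qed
    have ineq: "0 \<le> 0 + 2 * t * (ip0 u0 g - L g) + t^2 * ip0 g g" for t
    proof -
      have each: "0 \<le> 2 * t * (ip0 (u n) g - L g) + t^2 * ip0 g g + 1 / (real n + 1)" for n
      proof -
        have h: "(\<lambda>x. 1 * u n x + t * g x) \<in> Hreal" by (rule Hreal_lin[OF uH[of n] g])
        have "J (\<lambda>x. 1 * u n x + t * g x) = J (u n) + 2 * t * (ip0 (u n) g - L g) + t^2 * ip0 g g"
          unfolding J_def using ip0_quad[OF uH[of n] g, of 1 t] Llin[OF uH[of n] g, of 1 t] by (simp add: algebra_simps)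
        moreover have "m \<le> J (\<lambda>x. 1 * u n x + t * g x)" by (rule m_le[OF h])
        ultimately show ?thesis using uJ[of n] by linarith
      qed
      have "(\<lambda>n. 2 * t * (ip0 (u n) g - L g) + t^2 * ip0 g g + 1 / (real n + 1))
          \<longlonglongrightarrow> 2 * t * (ip0 u0 g - L g) + t^2 * ip0 g g + 0"
        by (intro tendsto_add tendsto_mult tendsto_diff tendsto_const iplim lim_inv_n)
      then have "0 \<le> 2 * t * (ip0 u0 g - L g) + t^2 * ip0 g g + 0"
        by (rule LIMSEQ_le_const) (use each in auto)
      then show ?thesis by simp
    qed
    have "(ip0 u0 g - L g)^2 \<le> 0 * ip0 g g" by (rule disc_le[OF ineq])
    then show ?thesis by simp
  qed
  then show ?thesis using u0 unfolding L_def by blast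
qed

lemma T0_prop:
  fixes F :: "real \<Rightarrow> real"
  assumes Fm: "F \<in> borel_measurable lborel" and FI: "integrable lborel (\<lambda>x. eta0 x * (F x)^2)"
  shows "T0 F \<in> Hreal" "\<And>g. g \<in> Hreal \<Longrightarrow> ip0 (T0 F) g = (\<integral>x. eta0 x * F x * g x \<partial>lborel)"
proof -
  let ?P = "\<lambda>u. u \<in> Hreal \<and> (\<forall>g\<in>Hreal. ip0 u g = (\<integral>x. eta0 x * F x * g x \<partial>lborel))"
  have ex1: "\<exists>!u. ?P u"
  proof (rule ex_ex1I)
    show "\<exists>u. ?P u" using riesz[OF Fm FI] by blast
  next
    fix u1 u2 assume p1: "?P u1" and p2: "?P u2"
    have u1: "u1 \<in> Hreal" and u2: "u2 \<in> Hreal" using p1 p2 by auto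
    have w: "(\<lambda>x. u1 x - u2 x) \<in> Hreal" by (rule Hreal_diff[OF u1 u2])
    have "ip0 (\<lambda>x. 1 * u1 x + (-1) * u2 x) (\<lambda>x. u1 x - u2 x) = 1 * ip0 u1 (\<lambda>x. u1 x - u2 x) + (-1) * ip0 u2 (\<lambda>x. u1 x - u2 x)"
      by (rule ip0_lin[OF u1 u2 w])
    also have "\<dots> = 0" using p1 p2 w by simp
    finally have "ip0 (\<lambda>x. u1 x - u2 x) (\<lambda>x. u1 x - u2 x) = 0" by simp
    then have "norm0 (\<lambda>x. u1 x - u2 x) = 0" unfolding norm0_def by simp
    then have "u1 x - u2 x = 0" for x using norm0_zero[OF w] by blast
    then show "u1 = u2" by auto
  qed
  have "?P (T0 F)" unfolding T0_def by (rule theI'[OF ex1])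
  then show "T0 F \<in> Hreal" "\<And>g. g \<in> Hreal \<Longrightarrow> ip0 (T0 F) g = (\<integral>x. eta0 x * F x * g x \<partial>lborel)"
    by auto
qed

lemma eta_sq_diff_int:
  fixes F G :: "real \<Rightarrow> real"
  assumes [measurable]: "F \<in> borel_measurable lborel" "G \<in> borel_measurable lborel"
    and FI: "integrable lborel (\<lambda>x. eta0 x * (F x)^2)" and GI: "integrable lborel (\<lambda>x. eta0 x * (G x)^2)"
  shows "integrable lborel (\<lambda>x. eta0 x * (F x - G x)^2)"
proof -
  have "integrable lborel (\<lambda>x. 2 * (eta0 x * (F x)^2) + 2 * (eta0 x * (G x)^2))" using FI GI by auto
  then show ?thesis
  proof (rule Bochner_Integration.integrable_bound)
    show "AE x in lborel. norm (eta0 x * (F x - G x)^2) \<le> norm (2 * (eta0 x * (F x)^2) + 2 * (eta0 x * (G x)^2))"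
    proof (intro AE_I2)
      fix x
      have "(F x - G x)^2 \<le> 2 * (F x)^2 + 2 * (G x)^2"
        using sum_squares_ge_zero[of "F x + G x" 0] by (simp add: power2_eq_square algebra_simps)
      then have "eta0 x * (F x - G x)^2 \<le> eta0 x * (2 * (F x)^2 + 2 * (G x)^2)"
        by (rule mult_left_mono) (simp add: eta0_nonneg)
      then show "norm (eta0 x * (F x - G x)^2) \<le> norm (2 * (eta0 x * (F x)^2) + 2 * (eta0 x * (G x)^2))"
        by (simp add: eta0_nonneg algebra_simps)
    qed
  qed auto
qed

lemma T0_lip:
  fixes F G :: "real \<Rightarrow> real"
  assumes Fm[measurable]: "F \<in> borel_measurable lborel" and Gm[measurable]: "G \<in> borel_measurable lborel"
    and FI: "integrable lborel (\<lambda>x. eta0 x * (F x)^2)" and GI: "integrable lborel (\<lambda>x. eta0 x * (G x)^2)"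
  shows "norm0 (\<lambda>x. T0 F x - T0 G x) \<le> sqrt (\<integral>x. eta0 x * (F x - G x)^2 \<partial>lborel)"
proof -
  note TF = T0_prop[OF Fm FI] and TG = T0_prop[OF Gm GI]
  define w where "w = (\<lambda>x. T0 F x - T0 G x)"
  have wH: "w \<in> Hreal" unfolding w_def by (rule Hreal_diff[OF TF(1) TG(1)])
  note wD = Hreal_D[OF wH]
  have [measurable]: "w \<in> borel_measurable lborel" using wD(4) .
  define \<Delta> where "\<Delta> = (\<integral>x. eta0 x * (F x - G x)^2 \<partial>lborel)"
  have \<Delta>: "0 \<le> \<Delta>" unfolding \<Delta>_def by (simp add: eta0_nonneg)
  have dI: "integrable lborel (\<lambda>x. eta0 x * (F x - G x)^2)" by (rule eta_sq_diff_int[OF Fm Gm FI GI])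
  have i1: "integrable lborel (\<lambda>x. eta0 x * F x * w x)"
    using FI wD(3) by (intro integrable_wprod_sq) (auto simp: eta0_nonneg)
  have i2: "integrable lborel (\<lambda>x. eta0 x * G x * w x)"
    using GI wD(3) by (intro integrable_wprod_sq) (auto simp: eta0_nonneg)
  have "ip0 w w = ip0 (\<lambda>x. 1 * T0 F x + (-1) * T0 G x) w" unfolding w_def by simp
  also have "\<dots> = 1 * ip0 (T0 F) w + (-1) * ip0 (T0 G) w" by (rule ip0_lin[OF TF(1) TG(1) wH])
  also have "\<dots> = (\<integral>x. eta0 x * F x * w x \<partial>lborel) - (\<integral>x. eta0 x * G x * w x \<partial>lborel)"
    using TF(2)[OF wH] TG(2)[OF wH] by simp
  also have "\<dots> = (\<integral>x. eta0 x * F x * w x - eta0 x * G x * w x \<partial>lborel)"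
    using i1 i2 by simp
  also have "\<dots> = (\<integral>x. eta0 x * (F x - G x) * w x \<partial>lborel)"
    by (simp add: algebra_simps)
  finally have ipw: "ip0 w w = (\<integral>x. eta0 x * (F x - G x) * w x \<partial>lborel)" .
  have "(ip0 w w)^2 \<le> \<Delta> * (\<integral>x. eta0 x * (w x)^2 \<partial>lborel)"
    unfolding ipw \<Delta>_def by (rule wCS) (use dI wD(3) in auto)
  also have "\<dots> \<le> \<Delta> * ip0 w w" using \<Delta> ip0_ge_parts(2)[OF wH] by (rule mult_left_mono[rotated])
  finally have sq: "(ip0 w w)^2 \<le> \<Delta> * ip0 w w" .
  have P: "0 \<le> ip0 w w" by (rule ip0_ge_parts(3)[OF wH])
  have "ip0 w w \<le> \<Delta>"
  proof (cases "ip0 w w = 0")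
    case True then show ?thesis using \<Delta> by simp
  next
    case False
    then have "0 < ip0 w w" using P by simp
    then show ?thesis using sq by (simp add: power2_eq_square mult_le_cancel_right)
  qed
  then have "sqrt (ip0 w w) \<le> sqrt \<Delta>" by (rule real_sqrt_le_mono)
  then show ?thesis unfolding norm0_def w_def \<Delta>_def .
qed

lemma rat_enum_dense:
  fixes x d :: real
  assumes "0 < d"
  shows "\<exists>k. \<bar>x - real_of_rat (from_nat k)\<bar> < d"
proof -
  obtain r where r: "r \<in> \<rat>" "x < r" "r < x + d" using Rats_dense_in_real[of x "x + d"] assms by auto
  obtain r' where r': "r = real_of_rat r'" using r(1) Rats_cases by blast
  have "real_of_rat (from_nat (to_nat r')) = r" using r' by simp
  then show ?thesis using r by (intro exI[of _ "to_nat r'"]) auto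
qed

lemma compact_embed:
  fixes fs :: "nat \<Rightarrow> real \<Rightarrow> real"
  assumes fs: "\<And>n. fs n \<in> Hreal" and bnd: "\<And>n. norm0 (fs n) \<le> B"
  shows "\<exists>r F. strict_mono r \<and> F \<in> borel_measurable lborel \<and> integrable lborel (\<lambda>x. eta0 x * (F x)^2) \<and>
     (\<lambda>n. \<integral>x. eta0 x * (fs (r n) x - F x)^2 \<partial>lborel) \<longlonglongrightarrow> 0"
proof -
  have B: "0 \<le> B" using bnd[of 0] norm0_nonneg[OF fs[of 0]] by linarith
  have ipB: "ip0 (fs n) (fs n) \<le> B^2" for n
  proof -
    have "(norm0 (fs n))^2 \<le> B^2" using bnd[of n] norm0_nonneg[OF fs[of n]] by (intro power_mono) auto
    then show ?thesis using norm0_sq[OF fs[of n]] by simp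
  qed
  obtain K where K: "0 < K" "\<And>f x. f \<in> Hreal \<Longrightarrow> (f x)^2 \<le> K * (1 + \<bar>x\<bar>) * ip0 f f"
    using pointwise_bound by blast
  have ptb: "(fs n x)^2 \<le> K * (1 + \<bar>x\<bar>) * B^2" for n x
  proof -
    have "(fs n x)^2 \<le> K * (1 + \<bar>x\<bar>) * ip0 (fs n) (fs n)" by (rule K(2)[OF fs])
    also have "\<dots> \<le> K * (1 + \<bar>x\<bar>) * B^2" using K(1) ipB[of n] by (intro mult_left_mono) auto
    finally show ?thesis .
  qed
  have ptb_abs: "\<bar>fs n x\<bar> \<le> sqrt (K * (1 + \<bar>x\<bar>) * B^2)" for n x
  proof -
    have "sqrt ((fs n x)^2) \<le> sqrt (K * (1 + \<bar>x\<bar>) * B^2)" by (rule real_sqrt_le_mono[OF ptb])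
    then show ?thesis by simp
  qed
  define q where "q k = real_of_rat (from_nat k)" for k
  define P where "P k \<sigma> = convergent (\<lambda>n. fs (\<sigma> n) (q k))" for k and \<sigma> :: "nat \<Rightarrow> nat"
  interpret S: subseqs P
  proof
    fix k :: nat and s :: "nat \<Rightarrow> nat" assume "strict_mono s"
    define X where "X n = fs (s n) (q k)" for n
    obtain f where f: "strict_mono f" "monoseq (\<lambda>n. X (f n))" using seq_monosub[of X] by blast
    have "Bseq (\<lambda>n. X (f n))"
      by (rule BseqI'[where K="sqrt (K * (1 + \<bar>q k\<bar>) * B^2)"]) (simp add: X_def ptb_abs)
    then have "convergent (\<lambda>n. X (f n))" using f(2) by (rule Bseq_monoseq_convergent)
    then show "\<exists>r'. strict_mono r' \<and> P k (s \<circ> r')"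
      using f(1) unfolding P_def X_def by (intro exI[of _ f]) (auto simp: o_def)
  qed
  define r where "r = S.diagseq"
  have r_mono: "strict_mono r" unfolding r_def by (rule S.subseq_diagseq)
  have convq: "convergent (\<lambda>n. fs (r n) (q k))" for k
  proof -
    have "P k (S.diagseq \<circ> (+) (Suc k))"
    proof (rule S.diagseq_holds)
      fix r' :: "nat \<Rightarrow> nat" and s :: "nat \<Rightarrow> nat" and n :: nat
      assume "strict_mono r'" "P n s"
      then show "P n (s \<circ> r')"
        unfolding P_def using convergent_subseq_convergent[of "\<lambda>m. fs (s m) (q n)" r'] by (simp add: o_def)
    qed
    then have "convergent (\<lambda>n. fs (r (n + Suc k)) (q k))" unfolding P_def r_def by (simp add: o_def add.commute)
    then show ?thesis by (subst (asm) convergent_ignore_initial_segment)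
  qed
  have cauchy: "Cauchy (\<lambda>n. fs (r n) x)" for x
  proof (rule metric_CauchyI)
    fix e :: real assume e: "0 < e"
    define d where "d = (e / 3)^2 / (B^2 + 1)"
    have "0 < (e / 3)^2" using e by simp
    moreover have "0 < B^2 + 1" by (simp add: add_nonneg_pos)
    ultimately have d: "0 < d" unfolding d_def by (rule divide_pos_pos)
    obtain k where k: "\<bar>x - q k\<bar> < d" using rat_enum_dense[OF d, of x] unfolding q_def by blast
    have close: "\<bar>fs n x - fs n (q k)\<bar> < e / 3" for n
    proof -
      have "(fs n x - fs n (q k))^2 \<le> \<bar>x - q k\<bar> * ip0 (fs n) (fs n)" by (rule holder_Hreal[OF fs])
      also have "\<dots> \<le> d * B^2"
        using k ipB[of n] ip0_ge_parts(3)[OF fs[of n]] by (intro mult_mono) auto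
      also have "\<dots> < (e / 3)^2"
      proof -
        have "d * B^2 = (e/3)^2 * (B^2 / (B^2 + 1))" unfolding d_def by simp
        also have "\<dots> < (e/3)^2 * 1"
        proof (rule mult_strict_left_mono)
          have h: "0 < B^2 + 1" by (simp add: add_nonneg_pos)
          then show "B^2 / (B^2 + 1) < 1" by (simp add: divide_less_eq)
        qed (use e in simp)
        finally show ?thesis by simp
      qed
      finally have "sqrt ((fs n x - fs n (q k))^2) < sqrt ((e / 3)^2)" by (rule real_sqrt_less_mono)
      then show ?thesis using e by simp
    qed
    have "Cauchy (\<lambda>n. fs (r n) (q k))" using convq[of k] by (simp add: Cauchy_convergent_iff)
    then obtain N where N: "\<And>m n. m \<ge> N \<Longrightarrow> n \<ge> N \<Longrightarrow> dist (fs (r m) (q k)) (fs (r n) (q k)) < e / 3"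
      using e unfolding Cauchy_def by (meson divide_pos_pos zero_less_numeral)
    have "dist (fs (r m) x) (fs (r n) x) < e" if "m \<ge> N" "n \<ge> N" for m n
    proof -
      have a: "\<bar>fs (r m) x - fs (r m) (q k)\<bar> < e / 3" by (rule close)
      have b: "\<bar>fs (r n) x - fs (r n) (q k)\<bar> < e / 3" by (rule close)
      have c: "\<bar>fs (r m) (q k) - fs (r n) (q k)\<bar> < e / 3" using N[OF that] by (simp add: dist_real_def)
      show ?thesis unfolding dist_real_def using a b c by linarith
    qed
    then show "\<exists>N. \<forall>m\<ge>N. \<forall>n\<ge>N. dist (fs (r m) x) (fs (r n) x) < e" by blast
  qed
  define F where "F x = lim (\<lambda>n. fs (r n) x)" for x
  have Flim: "(\<lambda>n. fs (r n) x) \<longlonglongrightarrow> F x" for x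
    unfolding F_def using cauchy[of x] by (simp add: Cauchy_convergent_iff convergent_LIMSEQ_iff)
  have fs_meas[measurable]: "fs n \<in> borel_measurable lborel" for n using Hreal_D(4)[OF fs] .
  have F_meas[measurable]: "F \<in> borel_measurable lborel"
    by (rule borel_measurable_LIMSEQ_real[OF Flim]) simp
  have Fb: "(F x)^2 \<le> K * (1 + \<bar>x\<bar>) * B^2" for x
  proof -
    have "(\<lambda>n. (fs (r n) x)^2) \<longlonglongrightarrow> (F x)^2" by (intro tendsto_intros Flim)
    then show ?thesis by (rule LIMSEQ_le_const2) (use ptb in auto)
  qed
  define W where "W x = 4 * K * B^2 * (eta0 x * (1 + \<bar>x\<bar>))" for x
  have Wi: "integrable lborel W" unfolding W_def using integrable_eta0_weight by simp
  have dom: "norm (eta0 x * (fs (r n) x - F x)^2) \<le> W x" for n x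
  proof -
    have "(fs (r n) x - F x)^2 \<le> 2 * (fs (r n) x)^2 + 2 * (F x)^2"
      using sum_squares_ge_zero[of "fs (r n) x + F x" 0] by (simp add: power2_eq_square algebra_simps)
    also have "\<dots> \<le> 2 * (K * (1 + \<bar>x\<bar>) * B^2) + 2 * (K * (1 + \<bar>x\<bar>) * B^2)"
      using ptb[of "r n" x] Fb[of x] by linarith
    finally have "eta0 x * (fs (r n) x - F x)^2 \<le> eta0 x * (4 * (K * (1 + \<bar>x\<bar>) * B^2))"
      by (intro mult_left_mono) (auto simp: eta0_nonneg)
    then show ?thesis unfolding W_def using eta0_nonneg[of x] by (simp add: algebra_simps)
  qed
  have "(\<lambda>n. \<integral>x. eta0 x * (fs (r n) x - F x)^2 \<partial>lborel) \<longlonglongrightarrow> integral\<^sup>L lborel (\<lambda>x::real. 0::real)"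
  proof (rule integral_dominated_convergence[where w=W and s="\<lambda>n x. eta0 x * (fs (r n) x - F x)^2" and f="\<lambda>x::real. 0::real" and M=lborel])
    show "AE x in lborel. (\<lambda>n. eta0 x * (fs (r n) x - F x)^2) \<longlonglongrightarrow> 0"
    proof (intro AE_I2)
      fix x
      have "(\<lambda>n. eta0 x * (fs (r n) x - F x)^2) \<longlonglongrightarrow> eta0 x * (F x - F x)^2"
        by (intro tendsto_intros Flim)
      then show "(\<lambda>n. eta0 x * (fs (r n) x - F x)^2) \<longlonglongrightarrow> 0" by simp
    qed
    show "\<And>n. AE x in lborel. norm (eta0 x * (fs (r n) x - F x)^2) \<le> W x" using dom by simp
  qed (use Wi in auto)
  then have lim: "(\<lambda>n. \<integral>x. eta0 x * (fs (r n) x - F x)^2 \<partial>lborel) \<longlonglongrightarrow> 0" by simp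
  have FI: "integrable lborel (\<lambda>x. eta0 x * (F x)^2)"
  proof (rule Bochner_Integration.integrable_bound[OF Wi])
    show "AE x in lborel. norm (eta0 x * (F x)^2) \<le> norm (W x)"
    proof (intro AE_I2)
      fix x
      have "eta0 x * (F x)^2 \<le> eta0 x * (K * (1 + \<bar>x\<bar>) * B^2)"
        using Fb[of x] by (intro mult_left_mono) (auto simp: eta0_nonneg)
      also have "\<dots> \<le> W x" unfolding W_def using eta0_nonneg[of x] K(1)
        by (simp add: algebra_simps mult_right_mono)
      finally show "norm (eta0 x * (F x)^2) \<le> norm (W x)" using eta0_nonneg[of x] by simp
    qed
  qed simp
  show ?thesis using r_mono F_meas FI lim by blast
qed

theorem lemma3p1:
  shows "(\<forall>f\<in>Hreal. T0 f \<in> Hreal) \<and>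
    (\<forall>(fs :: nat \<Rightarrow> real \<Rightarrow> real) B. (\<forall>n. fs n \<in> Hreal) \<and> (\<forall>n. norm0 (fs n) \<le> B) \<longrightarrow>
       (\<exists>r g. strict_mono r \<and> g \<in> Hreal \<and>
          (\<lambda>n. norm0 (\<lambda>x. T0 (fs (r n)) x - g x)) \<longlonglongrightarrow> 0))"
proof (intro conjI ballI allI impI)
  fix f assume f: "f \<in> Hreal"
  show "T0 f \<in> Hreal" using T0_prop(1)[OF Hreal_D(4)[OF f] Hreal_D(3)[OF f]] .
next
  fix fs :: "nat \<Rightarrow> real \<Rightarrow> real" and B :: real
  assume a: "(\<forall>n. fs n \<in> Hreal) \<and> (\<forall>n. norm0 (fs n) \<le> B)"
  then have fs: "\<And>n. fs n \<in> Hreal" and bnd: "\<And>n. norm0 (fs n) \<le> B" by auto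
  obtain r F where r: "strict_mono r" and Fm: "F \<in> borel_measurable lborel"
    and FI: "integrable lborel (\<lambda>x. eta0 x * (F x)^2)"
    and lim: "(\<lambda>n. \<integral>x. eta0 x * (fs (r n) x - F x)^2 \<partial>lborel) \<longlonglongrightarrow> 0"
    using compact_embed[of fs B, OF fs bnd] by auto
  have gH: "T0 F \<in> Hreal" by (rule T0_prop(1)[OF Fm FI])
  have "(\<lambda>n. norm0 (\<lambda>x. T0 (fs (r n)) x - T0 F x)) \<longlonglongrightarrow> 0"
  proof (rule Lim_null_comparison)
    show "\<forall>\<^sub>F n in sequentially. norm (norm0 (\<lambda>x. T0 (fs (r n)) x - T0 F x)) \<le> sqrt (\<integral>x. eta0 x * (fs (r n) x - F x)^2 \<partial>lborel)"
    proof (intro always_eventually allI)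
      fix n
      have fH: "fs (r n) \<in> Hreal" by (rule fs)
      have "norm0 (\<lambda>x. T0 (fs (r n)) x - T0 F x) \<le> sqrt (\<integral>x. eta0 x * (fs (r n) x - F x)^2 \<partial>lborel)"
        by (rule T0_lip[OF Hreal_D(4)[OF fH] Fm Hreal_D(3)[OF fH] FI])
      moreover have "0 \<le> norm0 (\<lambda>x. T0 (fs (r n)) x - T0 F x)"
        by (rule norm0_nonneg[OF Hreal_diff[OF T0_prop(1)[OF Hreal_D(4)[OF fH] Hreal_D(3)[OF fH]] gH]])
      ultimately show "norm (norm0 (\<lambda>x. T0 (fs (r n)) x - T0 F x)) \<le> sqrt (\<integral>x. eta0 x * (fs (r n) x - F x)^2 \<partial>lborel)"
        by simp
    qed
    have "(\<lambda>n. sqrt (\<integral>x. eta0 x * (fs (r n) x - F x)^2 \<partial>lborel)) \<longlonglongrightarrow> sqrt 0"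
      by (rule tendsto_real_sqrt[OF lim])
    then show "(\<lambda>n. sqrt (\<integral>x. eta0 x * (fs (r n) x - F x)^2 \<partial>lborel)) \<longlonglongrightarrow> 0" by simp
  qed
  then show "\<exists>r g. strict_mono r \<and> g \<in> Hreal \<and> (\<lambda>n. norm0 (\<lambda>x. T0 (fs (r n)) x - g x)) \<longlonglongrightarrow> 0"
    by (intro exI[of _ r] exI[of _ "T0 F"] conjI r gH)
qed

end
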